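(* Let $k$ be an algebraically closed field and let $\pi:(R,J)\to(Q,I)$ be a universal cover of the quiver with relations $(Q,I)$, where all quivers are connected. Then the fundamental group $\Pi(R,J)$ is trivial.
   Context: Quivers with relations $(Q,I)$: $Q$ a quiver, $I$ an ideal of the path category $kQ$ contained in the ideal generated by arrows. A relation $\rho=\sum_{i=1}^n\lambda_iu_i\in I(x,y)$ ($\lambda_i\in k^*$, $u_i$ distinct paths from $x$ to $y$) is minimal if $n\ge2$ and no sum over a nonempty proper subset of the indices lies in $I$; a zero relation if $n=1$. A covering of quivers $f:Q\to Q'$ is a quiver morphism inducing, for each vertex $x$, bijections between arrows starting (resp. ending) at $x$ and arrows starting (resp. ending) at $f(x)$. A covering of quivers with relations $f:(Q,I)\to(Q',I')$ is a covering of quivers such that $kf$ maps $I$ onto $I'$, and for every minimal or zero relation $\rho'\in I'(a',b')$ and every $a\in f^{-1}(a')$ (resp. $b\in f^{-1}(b')$) there exist $b\in f^{-1}(b')$ (resp. $a\in f^{-1}(a')$) and $\rho\in I(a,b)$ with $(kf)(\rho)=\rho'$. A walk is a composable sequence of arrows and formal inverses of arrows. Let $\sim_I$ be the equivalence relation on walks generated by: $\alpha^{-1}\alpha\sim_I 1_{s(\alpha)}$, $\alpha\alpha^{-1}\sim_I1_{t(\alpha)}$ for arrows $\alpha$; $p_1\sim_I p_2$ whenever $\sum_i\lambda_ip_i$ is a minimal relation of $I$; and $w_1\sim_I w_2\Rightarrow uw_1v\sim_I uw_2v$. The fundamental group $\Pi(Q,I)$ is the group (under concatenation) of $\sim_I$-classes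 of closed walks at a fixed vertex. A universal cover of $(Q,I)$ is a covering $\pi:(\widetilde Q,\widetilde I)\to(Q,I)$ such that for every covering $f:(\overline Q,\overline I)\to(Q,I)$ and every $\widetilde x\in\widetilde Q_0$, $\overline x\in\overline Q_0$ with $\pi\widetilde x=f\overline x$, there is a unique covering $\pi':(\widetilde Q,\widetilde I)\to(\overline Q,\overline I)$ with $f\pi'=\pi$ and $\pi'(\widetilde x)=\overline x$. *)

theory Defs
  imports "HOL-Algebra.Group" "HOL-Computational_Algebra.Polynomial"
begin

definition alg_closed :: "'k::field itself \<Rightarrow> bool" where
  "alg_closed _ \<longleftrightarrow> (\<forall>p :: 'k poly. degree p \<ge> 1 \<longrightarrow> (\<exists>z. poly p z = 0))"

record ('v, 'a) quiver =
  verts :: "'v set"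
  arrs  :: "'a set"
  src   :: "'a \<Rightarrow> 'v"
  tgt   :: "'a \<Rightarrow> 'v"

definition wf_quiver :: "('v, 'a) quiver \<Rightarrow> bool" where
  "wf_quiver Q \<longleftrightarrow> (\<forall>\<alpha>\<in>arrs Q. src Q \<alpha> \<in> verts Q \<and> tgt Q \<alpha> \<in> verts Q)"

text \<open>Paths are lists of arrows, read left to right: the target of each arrow is
  the source of the next one. The empty list from x to x is the trivial path at x.\<close>

fun is_path :: "('v, 'a) quiver \<Rightarrow> 'v \<Rightarrow> 'a list \<Rightarrow> 'v \<Rightarrow> bool" where
  "is_path Q x [] y \<longleftrightarrow> x \<in> verts Q \<and> y = x"
| "is_path Q x (\<alpha> # p) y \<longleftrightarrow> x \<in> verts Q \<and> \<alpha> \<in> arrs Q \<and> src Q \<alpha> = x \<and> is_path Q (tgt Q \<alpha>) p y"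

text \<open>A morphism of kQ(x,y) is a finite k-linear combination of paths from x to y,
  represented by its (finitely supported) coefficient function.\<close>

definition supp :: "('a list \<Rightarrow> 'k::zero) \<Rightarrow> 'a list set" where
  "supp f = {p. f p \<noteq> 0}"

definition kQ :: "('v, 'a) quiver \<Rightarrow> 'v \<Rightarrow> 'v \<Rightarrow> ('a list \<Rightarrow> 'k::field) set" where
  "kQ Q x y = {f. finite (supp f) \<and> (\<forall>p\<in>supp f. is_path Q x p y)}"

definition rmul :: "('a list \<Rightarrow> 'k::field) \<Rightarrow> 'a list \<Rightarrow> ('a list \<Rightarrow> 'k)" where
  "rmul f q = (\<lambda>u. if (\<exists>v. u = v @ q) then f (take (length u - length q) u) else 0)"

definition lmul :: "'a list \<Rightarrow> ('a list \<Rightarrow> 'k::field) \<Rightarrow> ('a list \<Rightarrow> 'k)" where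
  "lmul q f = (\<lambda>u. if (\<exists>v. u = q @ v) then f (drop (length q) u) else 0)"

text \<open>An ideal of kQ contained in the ideal generated by the arrows.\<close>

definition quiver_ideal :: "('v, 'a) quiver \<Rightarrow> ('v \<Rightarrow> 'v \<Rightarrow> ('a list \<Rightarrow> 'k::field) set) \<Rightarrow> bool" where
  "quiver_ideal Q I \<longleftrightarrow>
     (\<forall>x y. I x y \<subseteq> kQ Q x y) \<and>
     (\<forall>x y. (\<lambda>_. 0) \<in> I x y) \<and>
     (\<forall>x y f g. f \<in> I x y \<longrightarrow> g \<in> I x y \<longrightarrow> (\<lambda>u. f u + g u) \<in> I x y) \<and>
     (\<forall>x y c f. f \<in> I x y \<longrightarrow> (\<lambda>u. c * f u) \<in> I x y) \<and>
     (\<forall>x y z f q. f \<in> I x y \<longrightarrow> is_path Q y q z \<longrightarrow> rmul f q \<in> I x z) \<and>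
     (\<forall>w x y f q. f \<in> I x y \<longrightarrow> is_path Q w q x \<longrightarrow> lmul q f \<in> I w y) \<and>
     (\<forall>x f. f \<in> I x x \<longrightarrow> f [] = 0)"

definition restrict_to :: "('a list \<Rightarrow> 'k::zero) \<Rightarrow> 'a list set \<Rightarrow> ('a list \<Rightarrow> 'k)" where
  "restrict_to f S = (\<lambda>p. if p \<in> S then f p else 0)"

definition minimal_rel ::
  "('v, 'a) quiver \<Rightarrow> ('v \<Rightarrow> 'v \<Rightarrow> ('a list \<Rightarrow> 'k::field) set) \<Rightarrow> 'v \<Rightarrow> 'v \<Rightarrow> ('a list \<Rightarrow> 'k) \<Rightarrow> bool" where
  "minimal_rel Q I x y \<rho> \<longleftrightarrow> \<rho> \<in> I x y \<and> card (supp \<rho>) \<ge> 2 \<and>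
     (\<forall>S. S \<subseteq> supp \<rho> \<longrightarrow> S \<noteq> {} \<longrightarrow> S \<noteq> supp \<rho> \<longrightarrow> restrict_to \<rho> S \<notin> I x y)"

definition zero_rel ::
  "('v, 'a) quiver \<Rightarrow> ('v \<Rightarrow> 'v \<Rightarrow> ('a list \<Rightarrow> 'k::field) set) \<Rightarrow> 'v \<Rightarrow> 'v \<Rightarrow> ('a list \<Rightarrow> 'k) \<Rightarrow> bool" where
  "zero_rel Q I x y \<rho> \<longleftrightarrow> \<rho> \<in> I x y \<and> card (supp \<rho>) = 1"

definition covering_quiver ::
  "('v, 'a) quiver \<Rightarrow> ('w, 'b) quiver \<Rightarrow> ('v \<Rightarrow> 'w) \<Rightarrow> ('a \<Rightarrow> 'b) \<Rightarrow> bool" where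
  "covering_quiver Q Q' fv fa \<longleftrightarrow>
     (\<forall>x\<in>verts Q. fv x \<in> verts Q') \<and>
     (\<forall>\<alpha>\<in>arrs Q. fa \<alpha> \<in> arrs Q' \<and> src Q' (fa \<alpha>) = fv (src Q \<alpha>) \<and> tgt Q' (fa \<alpha>) = fv (tgt Q \<alpha>)) \<and>
     (\<forall>x\<in>verts Q.
        bij_betw fa {\<alpha>\<in>arrs Q. src Q \<alpha> = x} {\<beta>\<in>arrs Q'. src Q' \<beta> = fv x} \<and>
        bij_betw fa {\<alpha>\<in>arrs Q. tgt Q \<alpha> = x} {\<beta>\<in>arrs Q'. tgt Q' \<beta> = fv x})"

definition kmap :: "('a \<Rightarrow> 'b) \<Rightarrow> ('a list \<Rightarrow> 'k::field) \<Rightarrow> ('b list \<Rightarrow> 'k)" where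
  "kmap fa f = (\<lambda>u'. \<Sum>u\<in>{u\<in>supp f. map fa u = u'}. f u)"

inductive_set fsums :: "('a list \<Rightarrow> 'k::field) set \<Rightarrow> ('a list \<Rightarrow> 'k) set" for S where
  zero: "(\<lambda>_. 0) \<in> fsums S"
| add: "f \<in> S \<Longrightarrow> g \<in> fsums S \<Longrightarrow> (\<lambda>u. f u + g u) \<in> fsums S"

definition covering_rel ::
  "('v, 'a) quiver \<Rightarrow> ('v \<Rightarrow> 'v \<Rightarrow> ('a list \<Rightarrow> 'k::field) set) \<Rightarrow>
   ('w, 'b) quiver \<Rightarrow> ('w \<Rightarrow> 'w \<Rightarrow> ('b list \<Rightarrow> 'k) set) \<Rightarrow>
   ('v \<Rightarrow> 'w) \<Rightarrow> ('a \<Rightarrow> 'b) \<Rightarrow> bool" where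
  "covering_rel Q I Q' I' fv fa \<longleftrightarrow>
     covering_quiver Q Q' fv fa \<and>
     (\<forall>a' b'. I' a' b' =
        fsums (\<Union>{kmap fa ` I x y | x y. x \<in> verts Q \<and> y \<in> verts Q \<and> fv x = a' \<and> fv y = b'})) \<and>
     (\<forall>a' b' \<rho>'. minimal_rel Q' I' a' b' \<rho>' \<or> zero_rel Q' I' a' b' \<rho>' \<longrightarrow>
        (\<forall>a\<in>verts Q. fv a = a' \<longrightarrow> (\<exists>b\<in>verts Q. fv b = b' \<and> (\<exists>\<rho>\<in>I a b. kmap fa \<rho> = \<rho>'))) \<and>
        (\<forall>b\<in>verts Q. fv b = b' \<longrightarrow> (\<exists>a\<in>verts Q. fv a = a' \<and> (\<exists>\<rho>\<in>I a b. kmap fa \<rho> = \<rho>'))))"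

text \<open>A walk is a list of arrows (flag True) and formal inverses (flag False).\<close>

fun is_walk :: "('v, 'a) quiver \<Rightarrow> 'v \<Rightarrow> ('a \<times> bool) list \<Rightarrow> 'v \<Rightarrow> bool" where
  "is_walk Q x [] y \<longleftrightarrow> x \<in> verts Q \<and> y = x"
| "is_walk Q x ((\<alpha>, d) # w) y \<longleftrightarrow> x \<in> verts Q \<and> \<alpha> \<in> arrs Q \<and>
     (if d then src Q \<alpha> = x \<and> is_walk Q (tgt Q \<alpha>) w y
           else tgt Q \<alpha> = x \<and> is_walk Q (src Q \<alpha>) w y)"

definition connected_quiver :: "('v, 'a) quiver \<Rightarrow> bool" where
  "connected_quiver Q \<longleftrightarrow> verts Q \<noteq> {} \<and> (\<forall>x\<in>verts Q. \<forall>y\<in>verts Q. \<exists>w. is_walk Q x w y)"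

definition basic_homot ::
  "('v, 'a) quiver \<Rightarrow> ('v \<Rightarrow> 'v \<Rightarrow> ('a list \<Rightarrow> 'k::field) set) \<Rightarrow>
   'v \<Rightarrow> ('a \<times> bool) list \<Rightarrow> ('a \<times> bool) list \<Rightarrow> 'v \<Rightarrow> bool" where
  "basic_homot Q I y w w' z \<longleftrightarrow>
     (\<exists>\<alpha>\<in>arrs Q. y = src Q \<alpha> \<and> z = y \<and> w = [(\<alpha>, True), (\<alpha>, False)] \<and> w' = []) \<or>
     (\<exists>\<alpha>\<in>arrs Q. y = tgt Q \<alpha> \<and> z = y \<and> w = [(\<alpha>, False), (\<alpha>, True)] \<and> w' = []) \<or>
     (\<exists>\<rho> p1 p2. minimal_rel Q I y z \<rho> \<and> p1 \<in> supp \<rho> \<and> p2 \<in> supp \<rho> \<and>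
        w = map (\<lambda>a. (a, True)) p1 \<and> w' = map (\<lambda>a. (a, True)) p2)"

definition homot_step ::
  "('v, 'a) quiver \<Rightarrow> ('v \<Rightarrow> 'v \<Rightarrow> ('a list \<Rightarrow> 'k::field) set) \<Rightarrow>
   'v \<Rightarrow> ('a \<times> bool) list \<Rightarrow> ('a \<times> bool) list \<Rightarrow> bool" where
  "homot_step Q I x w1 w2 \<longleftrightarrow>
     (\<exists>u v w w' y z e. is_walk Q x u y \<and> basic_homot Q I y w w' z \<and> is_walk Q z v e \<and>
        w1 = u @ w @ v \<and> w2 = u @ w' @ v)"

definition homotopic ::
  "('v, 'a) quiver \<Rightarrow> ('v \<Rightarrow> 'v \<Rightarrow> ('a list \<Rightarrow> 'k::field) set) \<Rightarrow>
   'v \<Rightarrow> ('a \<times> bool) list \<Rightarrow> ('a \<times> bool) list \<Rightarrow> bool" where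
  "homotopic Q I x = (sup (homot_step Q I x) (homot_step Q I x)\<inverse>\<inverse>)\<^sup>*\<^sup>*"

definition homot_class ::
  "('v, 'a) quiver \<Rightarrow> ('v \<Rightarrow> 'v \<Rightarrow> ('a list \<Rightarrow> 'k::field) set) \<Rightarrow>
   'v \<Rightarrow> ('a \<times> bool) list \<Rightarrow> ('a \<times> bool) list set" where
  "homot_class Q I x w = {w'. is_walk Q x w' x \<and> homotopic Q I x w w'}"

definition fundamental_group ::
  "('v, 'a) quiver \<Rightarrow> ('v \<Rightarrow> 'v \<Rightarrow> ('a list \<Rightarrow> 'k::field) set) \<Rightarrow>
   'v \<Rightarrow> ('a \<times> bool) list set monoid" where
  "fundamental_group Q I x =
     \<lparr>carrier = {homot_class Q I x w | w. is_walk Q x w x},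
      monoid.mult = (\<lambda>A B. homot_class Q I x ((SOME a. a \<in> A) @ (SOME b. b \<in> B))),
      monoid.one = homot_class Q I x []\<rparr>"

text \<open>HOL cannot quantify over types inside a formula, so the universal property is
  required for all coverings whose quiver lives in a fixed, sufficiently large universe:
  vertices are walks of Q (every vertex of a connected covering is reached by the
  lift of a walk of Q) and arrows are pairs (source vertex, image arrow).\<close>

definition universal_cover ::
  "('rv, 'ra) quiver \<Rightarrow> ('rv \<Rightarrow> 'rv \<Rightarrow> ('ra list \<Rightarrow> 'k::field) set) \<Rightarrow>
   ('qv, 'qa) quiver \<Rightarrow> ('qv \<Rightarrow> 'qv \<Rightarrow> ('qa list \<Rightarrow> 'k) set) \<Rightarrow>
   ('rv \<Rightarrow> 'qv) \<Rightarrow> ('ra \<Rightarrow> 'qa) \<Rightarrow> bool" where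
  "universal_cover R J Q I \<pi>v \<pi>a \<longleftrightarrow>
     covering_rel R J Q I \<pi>v \<pi>a \<and>
     (\<forall>(Qb :: (('qa \<times> bool) list, ('qa \<times> bool) list \<times> 'qa) quiver) Ib fv fa xt xb.
        wf_quiver Qb \<and> quiver_ideal Qb Ib \<and> connected_quiver Qb \<and>
        covering_rel Qb Ib Q I fv fa \<and>
        xt \<in> verts R \<and> xb \<in> verts Qb \<and> \<pi>v xt = fv xb \<longrightarrow>
        (\<exists>gv ga. covering_rel R J Qb Ib gv ga \<and>
           (\<forall>x\<in>verts R. fv (gv x) = \<pi>v x) \<and> (\<forall>\<alpha>\<in>arrs R. fa (ga \<alpha>) = \<pi>a \<alpha>) \<and> gv xt = xb \<and>
           (\<forall>hv ha. covering_rel R J Qb Ib hv ha \<and>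
              (\<forall>x\<in>verts R. fv (hv x) = \<pi>v x) \<and> (\<forall>\<alpha>\<in>arrs R. fa (ha \<alpha>) = \<pi>a \<alpha>) \<and> hv xt = xb \<longrightarrow>
              (\<forall>x\<in>verts R. hv x = gv x) \<and> (\<forall>\<alpha>\<in>arrs R. ha \<alpha> = ga \<alpha>))))"

end

theory Submission
  imports Defs
begin



section \<open>Walks\<close>

fun wend :: "('v, 'a) quiver \<Rightarrow> 'v \<Rightarrow> ('a \<times> bool) list \<Rightarrow> 'v" where
  "wend G x [] = x"
| "wend G x ((\<alpha>, d) # w) = wend G (if d then tgt G \<alpha> else src G \<alpha>) w"

lemma is_walk_end: "is_walk G x w y \<Longrightarrow> y = wend G x w"
  by (induction G x w y rule: is_walk.induct) (auto split: if_splits)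

lemma is_walk_verts: "is_walk G x w y \<Longrightarrow> x \<in> verts G \<and> y \<in> verts G"
  by (induction G x w y rule: is_walk.induct) (auto split: if_splits)

lemma is_walk_append: "is_walk G x (u @ v) z \<longleftrightarrow> (\<exists>y. is_walk G x u y \<and> is_walk G y v z)"
proof (induction u arbitrary: x)
  case Nil then show ?case by (auto simp: is_walk_verts)
next
  case (Cons ab u)
  obtain a b where ab: "ab = (a, b)" by fastforce
  show ?case using Cons.IH[of "tgt G a"] Cons.IH[of "src G a"] unfolding ab by (cases b) auto
qed

lemma is_walk_appendI: "is_walk G x u y \<Longrightarrow> is_walk G y v z \<Longrightarrow> is_walk G x (u @ v) z"
  by (auto simp: is_walk_append)

abbreviation TT :: "'a list \<Rightarrow> ('a \<times> bool) list" where
  "TT p \<equiv> map (\<lambda>a. (a, True)) p"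

lemma is_walk_TT: "is_walk G x (TT p) y \<longleftrightarrow> is_path G x p y"
  by (induction p arbitrary: x) auto

lemma is_path_verts: "is_path G x p y \<Longrightarrow> x \<in> verts G \<and> y \<in> verts G"
  using is_walk_TT is_walk_verts by metis

lemma is_path_end_unique: "is_path G x p y \<Longrightarrow> is_path G x p y' \<Longrightarrow> y = y'"
  using is_walk_TT is_walk_end by metis

lemma is_path_append: "is_path G x (u @ v) z \<longleftrightarrow> (\<exists>y. is_path G x u y \<and> is_path G y v z)"
  by (induction u arbitrary: x) (auto simp: is_path_verts)

lemma is_walk_rev_path: "is_path G a p e \<Longrightarrow> is_walk G e (map (\<lambda>a. (a, False)) (rev p)) a"
proof (induction p arbitrary: a)
  case Nil then show ?case by auto
next
  case (Cons \<alpha> p)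
  then have "is_walk G e (map (\<lambda>a. (a, False)) (rev p)) (tgt G \<alpha>)" by auto
  moreover have "is_walk G (tgt G \<alpha>) [(\<alpha>, False)] a" using Cons.prems
    by (auto simp: is_path_verts)
  ultimately show ?case by (auto intro: is_walk_appendI)
qed

fun revw :: "('a \<times> bool) list \<Rightarrow> ('a \<times> bool) list" where
  "revw [] = []"
| "revw ((\<alpha>, d) # w) = revw w @ [(\<alpha>, \<not> d)]"

lemma is_walk_revw: "wf_quiver G \<Longrightarrow> is_walk G x w y \<Longrightarrow> is_walk G y (revw w) x"
proof (induction G x w y rule: is_walk.induct)
  case (1 Q x y) then show ?case by auto
next
  case (2 Q x \<alpha> d w y)
  show ?case
  proof (cases d)
    case True
    with 2 have "is_walk Q y (revw w) (tgt Q \<alpha>)" by auto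
    moreover have "is_walk Q (tgt Q \<alpha>) [(\<alpha>, False)] x" using 2 True
      by (auto simp: wf_quiver_def)
    ultimately show ?thesis using True by (auto intro: is_walk_appendI)
  next
    case False
    with 2 have "is_walk Q y (revw w) (src Q \<alpha>)" by auto
    moreover have "is_walk Q (src Q \<alpha>) [(\<alpha>, True)] x" using 2 False
      by (auto simp: wf_quiver_def)
    ultimately show ?thesis using False by (auto intro: is_walk_appendI)
  qed
qed

section \<open>Homotopy\<close>

lemma basic_homot_walk:
  assumes "wf_quiver G" "\<forall>x y. I x y \<subseteq> kQ G x y" "basic_homot G I y w w' z" "y \<in> verts G"
  shows "is_walk G y w z \<and> is_walk G y w' z"
  using assms unfolding basic_homot_def
proof (elim disjE exE conjE bexE)
  fix \<rho> p1 p2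
  assume "minimal_rel G I y z \<rho>" "p1 \<in> supp \<rho>" "p2 \<in> supp \<rho>" "w = TT p1" "w' = TT p2"
  then show ?thesis using assms(2) by (auto simp: minimal_rel_def kQ_def is_walk_TT)
qed (auto simp: wf_quiver_def)

lemma homot_step_walk:
  assumes "wf_quiver G" "\<forall>x y. I x y \<subseteq> kQ G x y" "homot_step G I x w1 w2"
  shows "\<exists>e. is_walk G x w1 e \<and> is_walk G x w2 e"
proof -
  obtain u v w w' y z e where h: "is_walk G x u y" "basic_homot G I y w w' z" "is_walk G z v e"
     "w1 = u @ w @ v" "w2 = u @ w' @ v"
    using assms(3) unfolding homot_step_def by blast
  have "y \<in> verts G" using h(1) is_walk_verts by metis
  then have "is_walk G y w z \<and> is_walk G y w' z" using basic_homot_walk assms h by metis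
  then show ?thesis using h by (auto intro!: is_walk_appendI)
qed

lemma homotopic_refl: "homotopic G I x w w"
  unfolding homotopic_def by simp

lemma homotopic_sym: "homotopic G I x w1 w2 \<Longrightarrow> homotopic G I x w2 w1"
  unfolding homotopic_def
proof (induction rule: rtranclp_induct)
  case base then show ?case by simp
next
  case (step b c)
  then have "(sup (homot_step G I x) (homot_step G I x)\<inverse>\<inverse>) c b" by auto
  then show ?case using step(3) by (rule converse_rtranclp_into_rtranclp)
qed

lemma homotopic_trans: "homotopic G I x w1 w2 \<Longrightarrow> homotopic G I x w2 w3 \<Longrightarrow> homotopic G I x w1 w3"
  unfolding homotopic_def by (rule rtranclp_trans)

lemma homot_step_homotopic: "homot_step G I x w1 w2 \<Longrightarrow> homotopic G I x w1 w2"
  unfolding homotopic_def by auto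

lemma homotopic_walk:
  assumes "wf_quiver G" "\<forall>x y. I x y \<subseteq> kQ G x y" "homotopic G I x w1 w2" "is_walk G x w1 e"
  shows "is_walk G x w2 e"
  using assms(3,4) unfolding homotopic_def
proof (induction rule: rtranclp_induct)
  case base then show ?case by simp
next
  case (step b c)
  then have wb: "is_walk G x b e" by blast
  from step(2) show ?case
  proof
    assume "homot_step G I x b c"
    then show ?thesis using homot_step_walk[OF assms(1,2)] wb is_walk_end by metis
  next
    assume "(homot_step G I x)\<inverse>\<inverse> b c"
    then have "homot_step G I x c b" by simp
    then show ?thesis using homot_step_walk[OF assms(1,2)] wb is_walk_end by metis
  qed
qed

lemma homot_step_append:
  assumes "wf_quiver G" "\<forall>x y. I x y \<subseteq> kQ G x y"
    "homot_step G I x w1 w2" "is_walk G x w1 e" "is_walk G e t f"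
  shows "homot_step G I x (w1 @ t) (w2 @ t)"
proof -
  obtain u v w w' y z e' where h: "is_walk G x u y" "basic_homot G I y w w' z" "is_walk G z v e'"
     "w1 = u @ w @ v" "w2 = u @ w' @ v"
    using assms(3) unfolding homot_step_def by blast
  have "y \<in> verts G" using h(1) is_walk_verts by metis
  then have "is_walk G y w z" using basic_homot_walk[OF assms(1,2) h(2)] by blast
  then have "is_walk G x (u @ w @ v) e'"
    using h(1,3) by (auto intro!: is_walk_appendI)
  then have "e' = e" using assms(4) h(4) is_walk_end by metis
  then have "is_walk G z (v @ t) f" using h(3) assms(5) is_walk_appendI by metis
  then show ?thesis unfolding homot_step_def using h
    by (intro exI[of _ u] exI[of _ "v @ t"] exI[of _ w] exI[of _ w'] exI[of _ y] exI[of _ z] exI[of _ f]) auto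
qed

lemma homotopic_append:
  assumes "wf_quiver G" "\<forall>x y. I x y \<subseteq> kQ G x y"
    "homotopic G I x w1 w2" "is_walk G x w1 e" "is_walk G e t f"
  shows "homotopic G I x (w1 @ t) (w2 @ t)"
  using assms(3,4) unfolding homotopic_def
proof (induction rule: rtranclp_induct)
  case base then show ?case by simp
next
  case (step b c)
  have wb: "is_walk G x b e" using homotopic_walk[OF assms(1,2)] step(1,4)
    unfolding homotopic_def by blast
  from step(2) have "(sup (homot_step G I x) (homot_step G I x)\<inverse>\<inverse>) (b @ t) (c @ t)"
  proof
    assume "homot_step G I x b c"
    then show ?thesis using homot_step_append[OF assms(1,2) _ wb assms(5)] by simp
  next
    assume "(homot_step G I x)\<inverse>\<inverse> b c"
    then have hc: "homot_step G I x c b" by simp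
    then have "is_walk G x c e" using homot_step_walk[OF assms(1,2)] wb is_walk_end by metis
    then show ?thesis using homot_step_append[OF assms(1,2) hc _ assms(5)] by simp
  qed
  with step(3)[OF step(4)] show ?case by (rule rtranclp.rtrancl_into_rtrancl)
qed

lemma homot_step_prepend:
  assumes "homot_step G I y w1 w2" "is_walk G x u y"
  shows "homot_step G I x (u @ w1) (u @ w2)"
proof -
  obtain u0 v w w' y' z e' where h: "is_walk G y u0 y'" "basic_homot G I y' w w' z" "is_walk G z v e'"
     "w1 = u0 @ w @ v" "w2 = u0 @ w' @ v"
    using assms(1) unfolding homot_step_def by blast
  show ?thesis unfolding homot_step_def using h assms(2)
    by (intro exI[of _ "u @ u0"] exI[of _ v] exI[of _ w] exI[of _ w'] exI[of _ y'] exI[of _ z] exI[of _ e'])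
       (auto intro: is_walk_appendI)
qed

lemma homotopic_prepend:
  assumes "homotopic G I y w1 w2" "is_walk G x u y"
  shows "homotopic G I x (u @ w1) (u @ w2)"
  using assms(1) unfolding homotopic_def
proof (induction rule: rtranclp_induct)
  case base then show ?case by simp
next
  case (step b c)
  from step(2) have "(sup (homot_step G I x) (homot_step G I x)\<inverse>\<inverse>) (u @ b) (u @ c)"
    using homot_step_prepend[OF _ assms(2)] by auto
  with step(3) show ?case by (rule rtranclp.rtrancl_into_rtrancl)
qed

lemma homot_cancel_TF:
  assumes "is_walk G x u y" "\<alpha> \<in> arrs G" "src G \<alpha> = y" "is_walk G y t e"
  shows "homot_step G I x (u @ [(\<alpha>, True), (\<alpha>, False)] @ t) (u @ t)"
  unfolding homot_step_def basic_homot_def using assms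
  by (intro exI[of _ u] exI[of _ t] exI[of _ "[(\<alpha>, True), (\<alpha>, False)]"] exI[of _ "[]"]
      exI[of _ y] exI[of _ y] exI[of _ e]) auto

lemma homot_cancel_FT:
  assumes "is_walk G x u y" "\<alpha> \<in> arrs G" "tgt G \<alpha> = y" "is_walk G y t e"
  shows "homot_step G I x (u @ [(\<alpha>, False), (\<alpha>, True)] @ t) (u @ t)"
  unfolding homot_step_def basic_homot_def using assms
  by (intro exI[of _ u] exI[of _ t] exI[of _ "[(\<alpha>, False), (\<alpha>, True)]"] exI[of _ "[]"]
      exI[of _ y] exI[of _ y] exI[of _ e]) auto

lemma homot_cancel_path:
  assumes "is_walk G x w e" "is_path G a p e"
  shows "homotopic G I x (w @ map (\<lambda>a. (a, False)) (rev p) @ TT p) w"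
  using assms(2)
proof (induction p arbitrary: a)
  case Nil then show ?case by (simp add: homotopic_refl)
next
  case (Cons \<alpha> p)
  have pp: "is_path G (tgt G \<alpha>) p e" and \<alpha>: "\<alpha> \<in> arrs G" "src G \<alpha> = a" using Cons.prems by auto
  have u: "is_walk G x (w @ map (\<lambda>a. (a, False)) (rev p)) (tgt G \<alpha>)"
    using is_walk_appendI[OF assms(1) is_walk_rev_path[OF pp]] .
  have "homot_step G I x ((w @ map (\<lambda>a. (a, False)) (rev p)) @ [(\<alpha>, False), (\<alpha>, True)] @ TT p)
         ((w @ map (\<lambda>a. (a, False)) (rev p)) @ TT p)"
    using homot_cancel_FT[OF u \<alpha>(1) refl] pp is_walk_TT by metis
  then have "homotopic G I x (w @ map (\<lambda>a. (a, False)) (rev (\<alpha> # p)) @ TT (\<alpha> # p))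
         (w @ map (\<lambda>a. (a, False)) (rev p) @ TT p)"
    by (simp add: homot_step_homotopic)
  then show ?case using Cons.IH[OF pp] by (rule homotopic_trans)
qed




section \<open>Linear combinations\<close>

lemma supp_zero[simp]: "supp (\<lambda>_. 0) = {}"
  by (simp add: supp_def)

lemma supp_empty: "supp f = {} \<Longrightarrow> f = (\<lambda>_. 0)"
  by (auto simp: supp_def)

lemma kQ_finite: "f \<in> kQ G x y \<Longrightarrow> finite (supp f)"
  by (simp add: kQ_def)

lemma kQ_path: "f \<in> kQ G x y \<Longrightarrow> p \<in> supp f \<Longrightarrow> is_path G x p y"
  by (simp add: kQ_def)

lemma supp_add: "supp (\<lambda>u. (f::'a list \<Rightarrow> 'k::field) u + g u) \<subseteq> supp f \<union> supp g"
  by (auto simp: supp_def)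

lemma kQ_add: "(f::'a list \<Rightarrow> 'k::field) \<in> kQ G x y \<Longrightarrow> g \<in> kQ G x y \<Longrightarrow> (\<lambda>u. f u + g u) \<in> kQ G x y"
  unfolding kQ_def using supp_add[of f g] by (auto intro: finite_subset)

lemma kQ_smult: "(f::'a list \<Rightarrow> 'k::field) \<in> kQ G x y \<Longrightarrow> (\<lambda>u. c * f u) \<in> kQ G x y"
  unfolding kQ_def supp_def by (auto intro: finite_subset)

lemma kQ_zero: "(\<lambda>_. 0) \<in> kQ G x y"
  unfolding kQ_def by simp

lemma kmap_zero: "kmap fa (\<lambda>_. 0) = (\<lambda>_. 0)"
  unfolding kmap_def by simp

lemma kmap_add:
  assumes "finite (supp f)" "finite (supp g)"
  shows "kmap fa (\<lambda>u. f u + g u) = (\<lambda>u'. kmap fa f u' + kmap fa g u')"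
proof
  fix u'
  define T where "T = {u \<in> supp f \<union> supp g. map fa u = u'}"
  have fT: "finite T" unfolding T_def using assms by auto
  have 1: "(\<Sum>u\<in>{u\<in>supp (\<lambda>u. f u + g u). map fa u = u'}. f u + g u) = (\<Sum>u\<in>T. f u + g u)"
    by (rule sum.mono_neutral_left[OF fT]) (auto simp: T_def supp_def)
  have 2: "(\<Sum>u\<in>{u\<in>supp f. map fa u = u'}. f u) = (\<Sum>u\<in>T. f u)"
    by (rule sum.mono_neutral_left[OF fT]) (auto simp: T_def supp_def)
  have 3: "(\<Sum>u\<in>{u\<in>supp g. map fa u = u'}. g u) = (\<Sum>u\<in>T. g u)"
    by (rule sum.mono_neutral_left[OF fT]) (auto simp: T_def supp_def)
  show "kmap fa (\<lambda>u. f u + g u) u' = kmap fa f u' + kmap fa g u'"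
    unfolding kmap_def using 1 2 3 by (simp add: sum.distrib)
qed

lemma kmap_smult: "kmap fa (\<lambda>u. c * f u) = (\<lambda>u'. c * kmap fa f u')"
proof (cases "c = 0")
  case True then show ?thesis unfolding kmap_def supp_def by simp
next
  case False
  then have "supp (\<lambda>u. c * f u) = supp f" by (auto simp: supp_def)
  then show ?thesis unfolding kmap_def by (simp add: sum_distrib_left)
qed

lemma rmul_app[simp]: "rmul f q (v @ q) = f v"
  unfolding rmul_def by auto

lemma rmul_not: "\<not> (\<exists>v. u = v @ q) \<Longrightarrow> rmul f q u = 0"
  unfolding rmul_def by auto

lemma supp_rmul: "supp (rmul f q) = (\<lambda>v. v @ q) ` supp f"
proof (intro Set.set_eqI iffI)
  fix u assume "u \<in> supp (rmul f q)"
  then have nz: "rmul f q u \<noteq> 0" by (simp add: supp_def)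
  then obtain v where uv: "u = v @ q" using rmul_not by blast
  then show "u \<in> (\<lambda>v. v @ q) ` supp f" using nz by (simp add: supp_def)
next
  fix u assume "u \<in> (\<lambda>v. v @ q) ` supp f"
  then obtain v where "u = v @ q" "v \<in> supp f" by blast
  then show "u \<in> supp (rmul f q)" by (simp add: supp_def)
qed

lemma lmul_app[simp]: "lmul q f (q @ v) = f v"
  unfolding lmul_def by auto

lemma lmul_not: "\<not> (\<exists>v. u = q @ v) \<Longrightarrow> lmul q f u = 0"
  unfolding lmul_def by auto

lemma supp_lmul: "supp (lmul q f) = (\<lambda>v. q @ v) ` supp f"
proof (intro Set.set_eqI iffI)
  fix u assume "u \<in> supp (lmul q f)"
  then have nz: "lmul q f u \<noteq> 0" by (simp add: supp_def)
  then obtain v where uv: "u = q @ v" using lmul_not by blast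
  then show "u \<in> (\<lambda>v. q @ v) ` supp f" using nz by (simp add: supp_def)
next
  fix u assume "u \<in> (\<lambda>v. q @ v) ` supp f"
  then obtain v where "u = q @ v" "v \<in> supp f" by blast
  then show "u \<in> supp (lmul q f)" by (simp add: supp_def)
qed

lemma kQ_rmul: assumes "f \<in> kQ G x y" "is_path G y q z" shows "rmul f q \<in> kQ G x z"
proof -
  have "finite (supp (rmul f q))" unfolding supp_rmul using kQ_finite[OF assms(1)] by simp
  moreover have "is_path G x p z" if "p \<in> supp (rmul f q)" for p
  proof -
    have "p \<in> (\<lambda>v. v @ q) ` supp f" using that unfolding supp_rmul by simp
    then obtain v where "p = v @ q" "v \<in> supp f" by blast
    then show ?thesis using kQ_path[OF assms(1)] assms(2) is_path_append by metis
  qed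
  ultimately show ?thesis unfolding kQ_def by blast
qed

lemma kQ_lmul: assumes "f \<in> kQ G x y" "is_path G w q x" shows "lmul q f \<in> kQ G w y"
proof -
  have "finite (supp (lmul q f))" unfolding supp_lmul using kQ_finite[OF assms(1)] by simp
  moreover have "is_path G w p y" if "p \<in> supp (lmul q f)" for p
  proof -
    have "p \<in> (\<lambda>v. q @ v) ` supp f" using that unfolding supp_lmul by simp
    then obtain v where "p = q @ v" "v \<in> supp f" by blast
    then show ?thesis using kQ_path[OF assms(1)] assms(2) is_path_append by metis
  qed
  ultimately show ?thesis unfolding kQ_def by blast
qed

lemma kmap_rmul: "kmap fa (rmul f q) = rmul (kmap fa f) (map fa q)"
proof
  fix u'
  have "kmap fa (rmul f q) u' = (\<Sum>u\<in>(\<lambda>v. v @ q) ` {v\<in>supp f. map fa (v @ q) = u'}. rmul f q u)"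
    unfolding kmap_def supp_rmul by (rule sum.cong) auto
  also have "\<dots> = (\<Sum>v\<in>{v\<in>supp f. map fa (v @ q) = u'}. f v)"
    by (subst sum.reindex) (auto simp: inj_on_def)
  finally have L: "kmap fa (rmul f q) u' = (\<Sum>v\<in>{v\<in>supp f. map fa (v @ q) = u'}. f v)" .
  show "kmap fa (rmul f q) u' = rmul (kmap fa f) (map fa q) u'"
  proof (cases "\<exists>w. u' = w @ map fa q")
    case True
    then obtain w where w: "u' = w @ map fa q" by blast
    have "{v\<in>supp f. map fa (v @ q) = u'} = {v\<in>supp f. map fa v = w}" using w by auto
    then show ?thesis using L w by (simp add: kmap_def)
  next
    case False
    then have E: "{v\<in>supp f. map fa (v @ q) = u'} = {}" by auto
    have "kmap fa (rmul f q) u' = 0" unfolding L E by simp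
    then show ?thesis using False by (simp add: rmul_not)
  qed
qed

lemma kmap_lmul: "kmap fa (lmul q f) = lmul (map fa q) (kmap fa f)"
proof
  fix u'
  have "kmap fa (lmul q f) u' = (\<Sum>u\<in>(\<lambda>v. q @ v) ` {v\<in>supp f. map fa (q @ v) = u'}. lmul q f u)"
    unfolding kmap_def supp_lmul by (rule sum.cong) auto
  also have "\<dots> = (\<Sum>v\<in>{v\<in>supp f. map fa (q @ v) = u'}. f v)"
    by (subst sum.reindex) (auto simp: inj_on_def)
  finally have L: "kmap fa (lmul q f) u' = (\<Sum>v\<in>{v\<in>supp f. map fa (q @ v) = u'}. f v)" .
  show "kmap fa (lmul q f) u' = lmul (map fa q) (kmap fa f) u'"
  proof (cases "\<exists>w. u' = map fa q @ w")
    case True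
    then obtain w where w: "u' = map fa q @ w" by blast
    have "{v\<in>supp f. map fa (q @ v) = u'} = {v\<in>supp f. map fa v = w}" using w by auto
    then show ?thesis using L w by (simp add: kmap_def)
  next
    case False
    then have E: "{v\<in>supp f. map fa (q @ v) = u'} = {}" by auto
    have "kmap fa (lmul q f) u' = 0" unfolding L E by simp
    then show ?thesis using False by (simp add: lmul_not)
  qed
qed

lemma kmap_nil: "kmap fa f [] = f []"
proof -
  have "{u \<in> supp f. map fa u = []} = (if f [] = 0 then {} else {[]})" by (auto simp: supp_def)
  then show ?thesis unfolding kmap_def by auto
qed

lemma kmap_nonzero: assumes "kmap fa f u' \<noteq> 0" shows "\<exists>u\<in>supp f. map fa u = u'"
proof (rule ccontr)
  assume "\<not> ?thesis"
  then have E: "{u\<in>supp f. map fa u = u'} = {}" by auto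
  have "kmap fa f u' = 0" unfolding kmap_def E by simp
  then show False using assms by simp
qed

section \<open>Restriction and decomposition\<close>

lemma restrict_all: "supp f \<subseteq> P \<Longrightarrow> restrict_to f P = f"
  unfolding restrict_to_def supp_def by (rule ext) auto

lemma restrict_none: "supp f \<inter> P = {} \<Longrightarrow> restrict_to f P = (\<lambda>_. 0)"
  unfolding restrict_to_def supp_def by (rule ext) auto

lemma supp_restrict: "supp (restrict_to f P) = supp f \<inter> P"
  unfolding restrict_to_def supp_def by auto

lemma ideal_sub: "quiver_ideal G I \<Longrightarrow> I x y \<subseteq> kQ G x y"
  by (simp add: quiver_ideal_def)
lemma ideal_zero: "quiver_ideal G I \<Longrightarrow> (\<lambda>_. 0) \<in> I x y"
  by (simp add: quiver_ideal_def)
lemma ideal_add: "quiver_ideal G I \<Longrightarrow> f \<in> I x y \<Longrightarrow> g \<in> I x y \<Longrightarrow> (\<lambda>u. f u + g u) \<in> I x y"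
  by (simp add: quiver_ideal_def)
lemma ideal_smult: "quiver_ideal G I \<Longrightarrow> f \<in> I x y \<Longrightarrow> (\<lambda>u. c * f u) \<in> I x y"
  by (simp add: quiver_ideal_def)
lemma ideal_kQ: "quiver_ideal G I \<Longrightarrow> f \<in> I x y \<Longrightarrow> f \<in> kQ G x y"
  using ideal_sub[of G I x y] by (rule subsetD)
lemma ideal_finite: "quiver_ideal G I \<Longrightarrow> f \<in> I x y \<Longrightarrow> finite (supp f)"
  by (rule kQ_finite[OF ideal_kQ])
lemma ideal_path: "quiver_ideal G I \<Longrightarrow> f \<in> I x y \<Longrightarrow> p \<in> supp f \<Longrightarrow> is_path G x p y"
  by (rule kQ_path[OF ideal_kQ])

lemma ideal_restrict:
  assumes qi: "quiver_ideal G I" and fI: "f \<in> I x y"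
    and H: "\<forall>\<rho>. minimal_rel G I x y \<rho> \<and> supp \<rho> \<subseteq> supp f \<longrightarrow> supp \<rho> \<subseteq> P \<or> supp \<rho> \<inter> P = {}"
  shows "restrict_to f P \<in> I x y"
  using fI H
proof (induction "card (supp f)" arbitrary: f rule: less_induct)
  case less
  have fin: "finite (supp f)" using less.prems(1) ideal_finite[OF qi] by blast
  have triv: "restrict_to f P \<in> I x y" if "supp f \<subseteq> P \<or> supp f \<inter> P = {}"
  proof -
    from that show ?thesis
    proof
      assume "supp f \<subseteq> P" then show ?thesis using restrict_all[of f P] less.prems(1) by simp
    next
      assume "supp f \<inter> P = {}" then show ?thesis using restrict_none[of f P] ideal_zero[OF qi] by simp
    qed
  qed
  show ?case
  proof (cases "card (supp f) \<le> 1")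
    case True
    then have "\<forall>a\<in>supp f. \<forall>b\<in>supp f. a = b" using True card_le_Suc0_iff_eq[OF fin] by simp
    then have eq: "\<And>a b. a \<in> supp f \<Longrightarrow> b \<in> supp f \<Longrightarrow> a = b" by blast
    have "supp f \<subseteq> P \<or> supp f \<inter> P = {}"
    proof (cases "supp f \<inter> P = {}")
      case False
      then obtain a where a: "a \<in> supp f" "a \<in> P" by blast
      have "supp f \<subseteq> P"
      proof
        fix b assume "b \<in> supp f" then show "b \<in> P" using eq[OF a(1)] a(2) by metis
      qed
      then show ?thesis by simp
    qed simp
    then show ?thesis by (rule triv)
  next
    case False
    show ?thesis
    proof (cases "minimal_rel G I x y f")
      case True
      then have "supp f \<subseteq> P \<or> supp f \<inter> P = {}" using less.prems(2)[rule_format, of f] by simp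
      then show ?thesis by (rule triv)
    next
      case nm: False
      have c2: "card (supp f) \<ge> 2" using False by simp
      have "\<not> (\<forall>S. S \<subseteq> supp f \<longrightarrow> S \<noteq> {} \<longrightarrow> S \<noteq> supp f \<longrightarrow> restrict_to f S \<notin> I x y)"
      proof
        assume A: "\<forall>S. S \<subseteq> supp f \<longrightarrow> S \<noteq> {} \<longrightarrow> S \<noteq> supp f \<longrightarrow> restrict_to f S \<notin> I x y"
        have "minimal_rel G I x y f" unfolding minimal_rel_def by (intro conjI less.prems(1) c2 A)
        then show False using nm by contradiction
      qed
      then obtain S where S: "S \<subseteq> supp f" "S \<noteq> {}" "S \<noteq> supp f" "restrict_to f S \<in> I x y"
        by blast
      define g where "g = restrict_to f S"
      define h where "h = (\<lambda>u. f u + (-1) * g u)"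
      have gI: "g \<in> I x y" using S g_def by simp
      have hI: "h \<in> I x y" unfolding h_def
        using ideal_add[OF qi less.prems(1) ideal_smult[OF qi gI, of "-1"]] by simp
      have sg: "supp g = S" using S(1) unfolding g_def supp_restrict by blast
      have "h = restrict_to f (supp f - S)"
        unfolding h_def g_def restrict_to_def by (rule ext) (simp add: supp_def)
      then have sh: "supp h = supp f - S" using supp_restrict[of f "supp f - S"] by blast
      have "S \<subset> supp f" using S(1,3) by (rule psubsetI)
      have cg: "card (supp g) < card (supp f)" using psubset_card_mono[OF fin \<open>S \<subset> supp f\<close>] sg by simp
      have ps: "supp f - S \<subset> supp f" using S(1,2) by blast
      have ch: "card (supp h) < card (supp f)" unfolding sh by (rule psubset_card_mono[OF fin ps])
      have Hg: "\<forall>\<rho>. minimal_rel G I x y \<rho> \<and> supp \<rho> \<subseteq> supp g \<longrightarrow> supp \<rho> \<subseteq> P \<or> supp \<rho> \<inter> P = {}"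
      proof (intro allI impI)
        fix \<rho> assume a: "minimal_rel G I x y \<rho> \<and> supp \<rho> \<subseteq> supp g"
        then have "supp \<rho> \<subseteq> supp f" using sg S(1) by (meson subset_trans)
        then show "supp \<rho> \<subseteq> P \<or> supp \<rho> \<inter> P = {}" using a less.prems(2)[rule_format, of \<rho>] by simp
      qed
      have Hh: "\<forall>\<rho>. minimal_rel G I x y \<rho> \<and> supp \<rho> \<subseteq> supp h \<longrightarrow> supp \<rho> \<subseteq> P \<or> supp \<rho> \<inter> P = {}"
      proof (intro allI impI)
        fix \<rho> assume a: "minimal_rel G I x y \<rho> \<and> supp \<rho> \<subseteq> supp h"
        then have "supp \<rho> \<subseteq> supp f" using sh by auto
        then show "supp \<rho> \<subseteq> P \<or> supp \<rho> \<inter> P = {}" using a less.prems(2)[rule_format, of \<rho>] by simp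
      qed
      have rg: "restrict_to g P \<in> I x y" using less.hyps[OF cg gI Hg] .
      have rh: "restrict_to h P \<in> I x y" using less.hyps[OF ch hI Hh] .
      have eq: "restrict_to f P = (\<lambda>u. restrict_to g P u + restrict_to h P u)"
        unfolding restrict_to_def h_def g_def by (rule ext) simp
      show ?thesis unfolding eq by (rule ideal_add[OF qi rg rh])
    qed
  qed
qed

lemma fsums_sub:
  assumes "quiver_ideal G I" "S \<subseteq> I x y"
  shows "fsums S \<subseteq> I x y"
proof
  fix f assume "f \<in> fsums S"
  then show "f \<in> I x y"
  proof (induction rule: fsums.induct)
    case zero then show ?case using ideal_zero[OF assms(1)] .
  next
    case (add f g)
    have "f \<in> I x y" using add.hyps(1) assms(2) by blast
    then show ?case by (rule ideal_add[OF assms(1) _ add.IH])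
  qed
qed

lemma fsums_single: "f \<in> S \<Longrightarrow> f \<in> fsums S"
  using fsums.add[OF _ fsums.zero, of f S] by simp

lemma fsums_sum:
  assumes "finite Y" "\<forall>y\<in>Y. g y \<in> S"
  shows "(\<lambda>u. \<Sum>y\<in>Y. g y u) \<in> fsums S"
  using assms
proof (induction Y rule: finite_induct)
  case empty then show ?case by (simp add: fsums.zero)
next
  case (insert y Y)
  have a: "g y \<in> S" using insert.prems by simp
  have b: "(\<lambda>u. \<Sum>y\<in>Y. g y u) \<in> fsums S" using insert.IH insert.prems by simp
  have "(\<lambda>u. g y u + (\<lambda>u. \<Sum>y\<in>Y. g y u) u) \<in> fsums S" by (rule fsums.add[OF a b])
  moreover have "(\<lambda>u. \<Sum>y\<in>insert y Y. g y u) = (\<lambda>u. g y u + (\<lambda>u. \<Sum>y\<in>Y. g y u) u)"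
    using insert(1,2) by simp
  ultimately show ?case by metis
qed




section \<open>Coverings of quivers\<close>

lemma fst_TT: "map fst (TT p) = p"
  by (induction p) auto

abbreviation mapw :: "('a \<Rightarrow> 'b) \<Rightarrow> ('a \<times> bool) list \<Rightarrow> ('b \<times> bool) list" where
  "mapw fa w \<equiv> map (\<lambda>(a, d). (fa a, d)) w"

context
  fixes G :: "('v, 'a) quiver" and H :: "('w, 'b) quiver" and fv :: "'v \<Rightarrow> 'w" and fa :: "'a \<Rightarrow> 'b"
  assumes cov: "covering_quiver G H fv fa"
begin

lemma cov_vert: "x \<in> verts G \<Longrightarrow> fv x \<in> verts H"
  using cov unfolding covering_quiver_def by simp

lemma cov_arr: "\<alpha> \<in> arrs G \<Longrightarrow> fa \<alpha> \<in> arrs H \<and> src H (fa \<alpha>) = fv (src G \<alpha>) \<and> tgt H (fa \<alpha>) = fv (tgt G \<alpha>)"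
  using cov unfolding covering_quiver_def by simp

lemma cov_out_bij: "x \<in> verts G \<Longrightarrow> bij_betw fa {\<alpha>\<in>arrs G. src G \<alpha> = x} {\<beta>\<in>arrs H. src H \<beta> = fv x}"
  using cov unfolding covering_quiver_def by simp

lemma cov_in_bij: "x \<in> verts G \<Longrightarrow> bij_betw fa {\<alpha>\<in>arrs G. tgt G \<alpha> = x} {\<beta>\<in>arrs H. tgt H \<beta> = fv x}"
  using cov unfolding covering_quiver_def by simp

lemma cov_out_inj:
  assumes "x \<in> verts G" "\<alpha> \<in> arrs G" "\<beta> \<in> arrs G" "src G \<alpha> = x" "src G \<beta> = x" "fa \<alpha> = fa \<beta>"
  shows "\<alpha> = \<beta>"
proof -
  have "inj_on fa {\<alpha>\<in>arrs G. src G \<alpha> = x}" using cov_out_bij[OF assms(1)] by (rule bij_betw_imp_inj_on)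
  then show ?thesis using assms(2-6) unfolding inj_on_def by simp
qed

lemma cov_in_inj:
  assumes "x \<in> verts G" "\<alpha> \<in> arrs G" "\<beta> \<in> arrs G" "tgt G \<alpha> = x" "tgt G \<beta> = x" "fa \<alpha> = fa \<beta>"
  shows "\<alpha> = \<beta>"
proof -
  have "inj_on fa {\<alpha>\<in>arrs G. tgt G \<alpha> = x}" using cov_in_bij[OF assms(1)] by (rule bij_betw_imp_inj_on)
  then show ?thesis using assms(2-6) unfolding inj_on_def by simp
qed

lemma cov_out_surj:
  assumes "x \<in> verts G" "\<beta> \<in> arrs H" "src H \<beta> = fv x"
  shows "\<exists>\<alpha>\<in>arrs G. src G \<alpha> = x \<and> fa \<alpha> = \<beta>"
proof -
  have "fa ` {\<alpha>\<in>arrs G. src G \<alpha> = x} = {\<beta>\<in>arrs H. src H \<beta> = fv x}"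
    using cov_out_bij[OF assms(1)] by (rule bij_betw_imp_surj_on)
  then have "\<beta> \<in> fa ` {\<alpha>\<in>arrs G. src G \<alpha> = x}" using assms(2,3) by simp
  then show ?thesis by auto
qed

lemma cov_in_surj:
  assumes "x \<in> verts G" "\<beta> \<in> arrs H" "tgt H \<beta> = fv x"
  shows "\<exists>\<alpha>\<in>arrs G. tgt G \<alpha> = x \<and> fa \<alpha> = \<beta>"
proof -
  have "fa ` {\<alpha>\<in>arrs G. tgt G \<alpha> = x} = {\<beta>\<in>arrs H. tgt H \<beta> = fv x}"
    using cov_in_bij[OF assms(1)] by (rule bij_betw_imp_surj_on)
  then have "\<beta> \<in> fa ` {\<alpha>\<in>arrs G. tgt G \<alpha> = x}" using assms(2,3) by simp
  then show ?thesis by auto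
qed

lemma cov_walk: "is_walk G x w y \<Longrightarrow> is_walk H (fv x) (mapw fa w) (fv y)"
proof (induction w arbitrary: x)
  case Nil then show ?case using cov_vert by simp
next
  case (Cons ad w)
  obtain a d where ad: "ad = (a, d)" by fastforce
  show ?case using Cons ad cov_vert cov_arr by (cases d) auto
qed

lemma cov_path: "is_path G x p y \<Longrightarrow> is_path H (fv x) (map fa p) (fv y)"
proof -
  assume "is_path G x p y"
  then have "is_walk G x (TT p) y" by (simp add: is_walk_TT)
  then have "is_walk H (fv x) (mapw fa (TT p)) (fv y)" by (rule cov_walk)
  moreover have "mapw fa (TT p) = TT (map fa p)" by simp
  ultimately have "is_walk H (fv x) (TT (map fa p)) (fv y)" by metis
  then show ?thesis by (simp only: is_walk_TT)
qed

lemma cov_walk_unique: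
  "is_walk G x w y \<Longrightarrow> is_walk G x w' y' \<Longrightarrow> mapw fa w = mapw fa w' \<Longrightarrow> w = w'"
proof (induction w arbitrary: x w')
  case Nil then show ?case by simp
next
  case (Cons ad w)
  obtain a d where ad: "ad = (a, d)" by fastforce
  obtain a' d' w'' where w': "w' = (a', d') # w''" using Cons.prems(3) ad by (cases w') auto
  have eq: "fa a = fa a'" "d = d'" "mapw fa w = mapw fa w''" using Cons.prems(3) ad w' by auto
  have x: "x \<in> verts G" using Cons.prems(1) ad by simp
  show ?case
  proof (cases d)
    case True
    have "a = a'" using Cons.prems(1,2) ad w' eq True cov_out_inj[OF x] by auto
    moreover have "w = w''" using Cons.IH[of "tgt G a" w''] Cons.prems(1,2) ad w' eq True \<open>a = a'\<close> by auto
    ultimately show ?thesis using ad w' eq by simp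
  next
    case False
    have "a = a'" using Cons.prems(1,2) ad w' eq False cov_in_inj[OF x] by auto
    moreover have "w = w''" using Cons.IH[of "src G a" w''] Cons.prems(1,2) ad w' eq False \<open>a = a'\<close> by auto
    ultimately show ?thesis using ad w' eq by simp
  qed
qed

lemma cov_path_unique:
  assumes "is_path G x p y" "is_path G x p' y'" "map fa p = map fa p'"
  shows "p = p' \<and> y = y'"
proof -
  have "is_walk G x (TT p) y" "is_walk G x (TT p') y'" using assms(1,2) by (simp_all add: is_walk_TT)
  moreover have "mapw fa (TT p) = mapw fa (TT p')"
  proof -
    have e: "\<And>q. mapw fa (TT q) = TT (map fa q)" by simp
    show ?thesis by (simp only: e assms(3))
  qed
  moreover have "TT p = TT p' \<Longrightarrow> p = p'" by (metis fst_TT)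
  ultimately have "p = p'" using cov_walk_unique by blast
  then show ?thesis using assms(1,2) is_path_end_unique by metis
qed

end

lemma mapw_TT: "mapw fa ws = TT p \<Longrightarrow> ws = TT (map fst ws) \<and> map fa (map fst ws) = p"
proof (induction ws arbitrary: p)
  case Nil then show ?case by simp
next
  case (Cons ad ws)
  obtain a d where ad: "ad = (a, d)" by fastforce
  obtain b p' where p: "p = b # p'" using Cons.prems by (cases p) auto
  then show ?case using Cons.prems Cons.IH[of p'] ad by auto
qed

lemma kmap_inj_app:
  assumes "inj_on (map fa) (supp f)" "u \<in> supp f"
  shows "kmap fa f (map fa u) = f u"
proof -
  have E: "{v\<in>supp f. map fa v = map fa u} = {u}" using assms unfolding inj_on_def by blast
  show ?thesis unfolding kmap_def E by simp
qed

lemma kmap_notin: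
  assumes "q \<notin> map fa ` supp f"
  shows "kmap fa f q = 0"
proof -
  have E: "{v\<in>supp f. map fa v = q} = {}" using assms by blast
  show ?thesis unfolding kmap_def E by simp
qed

section \<open>Lifting homotopies along a covering\<close>

context
  fixes G :: "('v, 'a) quiver" and J :: "'v \<Rightarrow> 'v \<Rightarrow> ('a list \<Rightarrow> 'k::field) set"
    and H :: "('w, 'b) quiver" and I :: "'w \<Rightarrow> 'w \<Rightarrow> ('b list \<Rightarrow> 'k) set"
    and fv :: "'v \<Rightarrow> 'w" and fa :: "'a \<Rightarrow> 'b"
  assumes covr: "covering_rel G J H I fv fa" and wfG: "wf_quiver G" and qJ: "quiver_ideal G J"
begin

lemma covq: "covering_quiver G H fv fa"
  using covr unfolding covering_rel_def by simp

lemma kmap_J_in_I: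
  assumes "x \<in> verts G" "y \<in> verts G" "\<rho> \<in> J x y"
  shows "kmap fa \<rho> \<in> I (fv x) (fv y)"
proof -
  have eq: "I (fv x) (fv y) = fsums (\<Union>{kmap fa ` J x' y' | x' y'. x' \<in> verts G \<and> y' \<in> verts G \<and> fv x' = fv x \<and> fv y' = fv y})"
    using covr unfolding covering_rel_def by blast
  have "kmap fa \<rho> \<in> kmap fa ` J x y" using assms(3) by simp
  then have "kmap fa \<rho> \<in> \<Union>{kmap fa ` J x' y' | x' y'. x' \<in> verts G \<and> y' \<in> verts G \<and> fv x' = fv x \<and> fv y' = fv y}"
    using assms(1,2) by blast
  then show ?thesis unfolding eq by (rule fsums_single)
qed

lemma lift_minimal:
  assumes y: "y \<in> verts G" and p1: "is_path G y p1 z" and m: "minimal_rel H I (fv y) z' \<rho>"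
    and p1s: "map fa p1 \<in> supp \<rho>" and p2s: "p2 \<in> supp \<rho>"
  shows "\<exists>q2 \<rho>'. is_path G y q2 z \<and> map fa q2 = p2 \<and> minimal_rel G J y z \<rho>' \<and> p1 \<in> supp \<rho>' \<and> q2 \<in> supp \<rho>'"
proof -
  have "\<forall>a\<in>verts G. fv a = fv y \<longrightarrow> (\<exists>b\<in>verts G. fv b = z' \<and> (\<exists>\<rho>'\<in>J a b. kmap fa \<rho>' = \<rho>))"
    using covr m unfolding covering_rel_def by blast
  then obtain b \<rho>' where b: "b \<in> verts G" "fv b = z'" and \<rho>': "\<rho>' \<in> J y b" "kmap fa \<rho>' = \<rho>"
    using y by blast
  have \<rho>'k: "\<rho>' \<in> kQ G y b" using ideal_kQ[OF qJ \<rho>'(1)] .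
  have fin: "finite (supp \<rho>')" using kQ_finite[OF \<rho>'k] .
  have inj: "inj_on (map fa) (supp \<rho>')"
  proof (rule inj_onI)
    fix u v assume "u \<in> supp \<rho>'" "v \<in> supp \<rho>'" "map fa u = map fa v"
    then show "u = v" using cov_path_unique[OF covq] kQ_path[OF \<rho>'k] by metis
  qed
  have lift: "\<exists>u\<in>supp \<rho>'. map fa u = q" if "q \<in> supp \<rho>" for q
  proof -
    have "kmap fa \<rho>' q \<noteq> 0" using that \<rho>'(2) by (simp add: supp_def)
    then show ?thesis by (rule kmap_nonzero)
  qed
  obtain u1 where u1: "u1 \<in> supp \<rho>'" "map fa u1 = map fa p1" using lift[OF p1s] by blast
  have "is_path G y u1 b" using kQ_path[OF \<rho>'k u1(1)] .
  then have "u1 = p1 \<and> b = z" using cov_path_unique[OF covq _ p1] u1(2) by metis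
  then have u1p: "u1 = p1" and bz: "b = z" by simp_all
  obtain u2 where u2: "u2 \<in> supp \<rho>'" "map fa u2 = p2" using lift[OF p2s] by blast
  have u2p: "is_path G y u2 z" using kQ_path[OF \<rho>'k u2(1)] bz by simp
  have mr: "minimal_rel G J y z \<rho>'"
    unfolding minimal_rel_def
  proof (intro conjI allI impI)
    show "\<rho>' \<in> J y z" using \<rho>'(1) bz by simp
    have "supp \<rho> \<subseteq> map fa ` supp \<rho>'" using lift by blast
    then have "card (supp \<rho>) \<le> card (map fa ` supp \<rho>')" using fin by (simp add: card_mono)
    also have "\<dots> \<le> card (supp \<rho>')" using fin by (rule card_image_le)
    finally show "2 \<le> card (supp \<rho>')" using m unfolding minimal_rel_def by simp
  next
    fix S assume S: "S \<subseteq> supp \<rho>'" "S \<noteq> {}" "S \<noteq> supp \<rho>'"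
    show "restrict_to \<rho>' S \<notin> J y z"
    proof
      assume rS: "restrict_to \<rho>' S \<in> J y z"
      have sr: "supp (restrict_to \<rho>' S) = S" using S(1) supp_restrict by blast
      have injS: "inj_on (map fa) (supp (restrict_to \<rho>' S))" using inj S(1) sr inj_on_subset by metis
      have keq: "kmap fa (restrict_to \<rho>' S) = restrict_to \<rho> (map fa ` S)"
      proof
        fix q
        show "kmap fa (restrict_to \<rho>' S) q = restrict_to \<rho> (map fa ` S) q"
        proof (cases "q \<in> map fa ` S")
          case True
          then obtain u where u: "u \<in> S" "q = map fa u" by blast
          have "kmap fa (restrict_to \<rho>' S) q = restrict_to \<rho>' S u"
            using kmap_inj_app[OF injS] u sr by simp
          also have "\<dots> = \<rho>' u" using u by (simp add: restrict_to_def)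
          also have "\<dots> = \<rho> q" using kmap_inj_app[OF inj] u S(1) \<rho>'(2) by auto
          finally show ?thesis using True by (simp add: restrict_to_def)
        next
          case False
          then have "kmap fa (restrict_to \<rho>' S) q = 0" using sr kmap_notin by metis
          then show ?thesis using False by (simp add: restrict_to_def)
        qed
      qed
      have "kmap fa (restrict_to \<rho>' S) \<in> I (fv y) (fv z)"
        using kmap_J_in_I[OF y _ rS] b bz by simp
      then have inI: "restrict_to \<rho> (map fa ` S) \<in> I (fv y) z'" using keq b bz by simp
      have s1: "map fa ` S \<subseteq> supp \<rho>"
      proof
        fix q assume "q \<in> map fa ` S"
        then obtain u where u: "u \<in> S" "q = map fa u" by blast
        have "\<rho> q = \<rho>' u" using kmap_inj_app[OF inj] u S(1) \<rho>'(2) by auto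
        then show "q \<in> supp \<rho>" using u S(1) by (auto simp: supp_def)
      qed
      have s2: "map fa ` S \<noteq> {}" using S(2) by simp
      have s3: "map fa ` S \<noteq> supp \<rho>"
      proof
        assume eqS: "map fa ` S = supp \<rho>"
        have "supp \<rho>' \<subseteq> S"
        proof
          fix u assume u: "u \<in> supp \<rho>'"
          have "\<rho> (map fa u) = \<rho>' u" using kmap_inj_app[OF inj u] \<rho>'(2) by simp
          then have "map fa u \<in> supp \<rho>" using u by (simp add: supp_def)
          then obtain u' where "u' \<in> S" "map fa u' = map fa u" using eqS by (metis imageE)
          then show "u \<in> S" using inj u S(1) unfolding inj_on_def by blast
        qed
        then show False using S(1,3) by blast
      qed
      show False using m inI s1 s2 s3 unfolding minimal_rel_def by blast
    qed
  qed
  show ?thesis using u2p u2(2) mr u1(1) u1p u2(1) by blast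
qed

end

lemma split3:
  assumes "mapw fa w = u @ s @ t"
  shows "\<exists>wu ws wt. w = wu @ ws @ wt \<and> mapw fa wu = u \<and> mapw fa ws = s \<and> mapw fa wt = t"
proof -
  obtain wu w2 where 1: "w = wu @ w2" "u = mapw fa wu" "s @ t = mapw fa w2"
    using assms map_eq_append_conv[of "\<lambda>(a, d). (fa a, d)" w u "s @ t"] by blast
  obtain ws wt where 2: "w2 = ws @ wt" "s = mapw fa ws" "t = mapw fa wt"
    using 1(3) map_eq_append_conv[of "\<lambda>(a, d). (fa a, d)" w2 s t] by metis
  show ?thesis using 1 2 by blast
qed

context
  fixes G :: "('v, 'a) quiver" and J :: "'v \<Rightarrow> 'v \<Rightarrow> ('a list \<Rightarrow> 'k::field) set"
    and H :: "('w, 'b) quiver" and I :: "'w \<Rightarrow> 'w \<Rightarrow> ('b list \<Rightarrow> 'k) set"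
    and fv :: "'v \<Rightarrow> 'w" and fa :: "'a \<Rightarrow> 'b"
  assumes covr: "covering_rel G J H I fv fa" and wfG: "wf_quiver G" and qJ: "quiver_ideal G J"
begin

lemma covq': "covering_quiver G H fv fa"
  using covr unfolding covering_rel_def by simp

lemma map2_lift:
  assumes "mapw fa ws = [(a1, d1), (a2, d2)]"
  shows "\<exists>b1 b2. ws = [(b1, d1), (b2, d2)] \<and> fa b1 = a1 \<and> fa b2 = a2"
  using assms by (auto simp: map_eq_Cons_conv split: prod.splits)

lemma mapw_TT_eq: "mapw fa (TT q) = TT (map fa q)"
  by simp

lemma walk_split3:
  assumes "is_walk G x (wu @ ws @ wt) e"
  shows "\<exists>y z. is_walk G x wu y \<and> is_walk G y ws z \<and> is_walk G z wt e"
  using assms is_walk_append by metis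

lemma lift_fwd:
  assumes w: "is_walk G x w e" and hs: "homot_step H I (fv x) (mapw fa w) W2"
  shows "\<exists>w'. is_walk G x w' e \<and> mapw fa w' = W2 \<and> homot_step G J x w w'"
proof -
  obtain u t s s' y z e' where h: "is_walk H (fv x) u y" "basic_homot H I y s s' z" "is_walk H z t e'"
    "mapw fa w = u @ s @ t" "W2 = u @ s' @ t"
    using hs unfolding homot_step_def by blast
  obtain wu ws wt where sp: "w = wu @ ws @ wt" "mapw fa wu = u" "mapw fa ws = s" "mapw fa wt = t"
    using split3[OF h(4)] by blast
  obtain y' z' where ww: "is_walk G x wu y'" "is_walk G y' ws z'" "is_walk G z' wt e"
    using walk_split3 w sp(1) by metis
  have "is_walk H (fv x) u (fv y')" using cov_walk[OF covq' ww(1)] sp(2) by simp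
  then have yy: "fv y' = y" using h(1) is_walk_end by metis
  have y'v: "y' \<in> verts G" using ww(1) is_walk_verts by metis
  from h(2) show ?thesis unfolding basic_homot_def
  proof (elim disjE exE conjE bexE)
    fix \<alpha> assume a: "\<alpha> \<in> arrs H" "y = src H \<alpha>" "z = y" "s = [(\<alpha>, True), (\<alpha>, False)]" "s' = []"
    obtain b1 b2 where b: "ws = [(b1, True), (b2, False)]" "fa b1 = \<alpha>" "fa b2 = \<alpha>"
      using map2_lift[of ws \<alpha> True \<alpha> False] sp(3) a(4) by blast
    have bw: "b1 \<in> arrs G" "src G b1 = y'" "b2 \<in> arrs G" "tgt G b2 = tgt G b1" "z' = src G b2"
      using ww(2) b(1) by auto
    have tv: "tgt G b1 \<in> verts G" using wfG bw(1) unfolding wf_quiver_def by blast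
    have "b1 = b2" using cov_in_inj[OF covq' tv bw(1) bw(3) refl bw(4)] b(2,3) by simp
    then have zy: "z' = y'" using bw by simp
    have wk: "is_walk G x (wu @ wt) e" using ww(1) ww(3) zy is_walk_appendI by metis
    have bh: "basic_homot G J y' ws [] y'" unfolding basic_homot_def using bw b(1) \<open>b1 = b2\<close> by auto
    have "homot_step G J x w (wu @ wt)" unfolding homot_step_def
      using ww(1) bh ww(3) zy sp(1)
      by (intro exI[of _ wu] exI[of _ wt] exI[of _ ws] exI[of _ "[]"] exI[of _ y'] exI[of _ y'] exI[of _ e]) simp
    moreover have "mapw fa (wu @ wt) = W2" using sp h(5) a(5) by simp
    ultimately show ?thesis using wk by blast
  next
    fix \<alpha> assume a: "\<alpha> \<in> arrs H" "y = tgt H \<alpha>" "z = y" "s = [(\<alpha>, False), (\<alpha>, True)]" "s' = []"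
    obtain b1 b2 where b: "ws = [(b1, False), (b2, True)]" "fa b1 = \<alpha>" "fa b2 = \<alpha>"
      using map2_lift[of ws \<alpha> False \<alpha> True] sp(3) a(4) by blast
    have bw: "b1 \<in> arrs G" "tgt G b1 = y'" "b2 \<in> arrs G" "src G b2 = src G b1" "z' = tgt G b2"
      using ww(2) b(1) by auto
    have sv: "src G b1 \<in> verts G" using wfG bw(1) unfolding wf_quiver_def by blast
    have "b1 = b2" using cov_out_inj[OF covq' sv bw(1) bw(3) refl bw(4)] b(2,3) by simp
    then have zy: "z' = y'" using bw by simp
    have wk: "is_walk G x (wu @ wt) e" using ww(1) ww(3) zy is_walk_appendI by metis
    have bh: "basic_homot G J y' ws [] y'" unfolding basic_homot_def using bw b(1) \<open>b1 = b2\<close> by auto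
    have "homot_step G J x w (wu @ wt)" unfolding homot_step_def
      using ww(1) bh ww(3) zy sp(1)
      by (intro exI[of _ wu] exI[of _ wt] exI[of _ ws] exI[of _ "[]"] exI[of _ y'] exI[of _ y'] exI[of _ e]) simp
    moreover have "mapw fa (wu @ wt) = W2" using sp h(5) a(5) by simp
    ultimately show ?thesis using wk by blast
  next
    fix \<rho> p1 p2 assume a: "minimal_rel H I y z \<rho>" "p1 \<in> supp \<rho>" "p2 \<in> supp \<rho>" "s = TT p1" "s' = TT p2"
    have q1: "ws = TT (map fst ws)" "map fa (map fst ws) = p1" using mapw_TT sp(3) a(4) by metis+
    have q1p: "is_path G y' (map fst ws) z'" using ww(2) q1(1) is_walk_TT by metis
    obtain q2 \<rho>' where L: "is_path G y' q2 z'" "map fa q2 = p2" "minimal_rel G J y' z' \<rho>'"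
      "map fst ws \<in> supp \<rho>'" "q2 \<in> supp \<rho>'"
      using lift_minimal[OF covr wfG qJ y'v q1p, of z \<rho> p2] a(1,2,3) yy q1(2) by blast
    have wk: "is_walk G x (wu @ TT q2 @ wt) e"
      using ww(1) ww(3) L(1) is_walk_TT is_walk_appendI by metis
    have bh: "basic_homot G J y' ws (TT q2) z'" unfolding basic_homot_def using L q1(1) by blast
    have "homot_step G J x w (wu @ TT q2 @ wt)" unfolding homot_step_def
      using ww(1) bh ww(3) sp(1)
      by (intro exI[of _ wu] exI[of _ wt] exI[of _ ws] exI[of _ "TT q2"] exI[of _ y'] exI[of _ z'] exI[of _ e]) simp
    moreover have "mapw fa (wu @ TT q2 @ wt) = W2"
      using sp h(5) a(5) L(2) by (simp only: map_append mapw_TT_eq)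
    ultimately show ?thesis using wk by blast
  qed
qed

lemma lift_bwd:
  assumes w: "is_walk G x w e" and hs: "homot_step H I (fv x) W1 (mapw fa w)"
  shows "\<exists>w'. is_walk G x w' e \<and> mapw fa w' = W1 \<and> homot_step G J x w' w"
proof -
  obtain u t s s' y z e' where h: "is_walk H (fv x) u y" "basic_homot H I y s s' z" "is_walk H z t e'"
    "W1 = u @ s @ t" "mapw fa w = u @ s' @ t"
    using hs unfolding homot_step_def by blast
  obtain wu ws wt where sp: "w = wu @ ws @ wt" "mapw fa wu = u" "mapw fa ws = s'" "mapw fa wt = t"
    using split3[OF h(5)] by blast
  obtain y' z' where ww: "is_walk G x wu y'" "is_walk G y' ws z'" "is_walk G z' wt e"
    using walk_split3 w sp(1) by metis
  have "is_walk H (fv x) u (fv y')" using cov_walk[OF covq' ww(1)] sp(2) by simp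
  then have yy: "fv y' = y" using h(1) is_walk_end by metis
  have y'v: "y' \<in> verts G" using ww(1) is_walk_verts by metis
  from h(2) show ?thesis unfolding basic_homot_def
  proof (elim disjE exE conjE bexE)
    fix \<alpha> assume a: "\<alpha> \<in> arrs H" "y = src H \<alpha>" "z = y" "s = [(\<alpha>, True), (\<alpha>, False)]" "s' = []"
    have ws0: "ws = []" using sp(3) a(5) by simp
    then have zy: "z' = y'" using ww(2) by simp
    obtain \<beta> where \<beta>: "\<beta> \<in> arrs G" "src G \<beta> = y'" "fa \<beta> = \<alpha>"
      using cov_out_surj[OF covq' y'v a(1)] a(2) yy by metis
    have tv: "tgt G \<beta> \<in> verts G" using wfG \<beta>(1) unfolding wf_quiver_def by blast
    have bw: "is_walk G y' [(\<beta>, True), (\<beta>, False)] y'" using \<beta> tv y'v by simp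
    have wk: "is_walk G x (wu @ [(\<beta>, True), (\<beta>, False)] @ wt) e"
      using ww(1) bw ww(3) zy is_walk_appendI by metis
    have bh: "basic_homot G J y' [(\<beta>, True), (\<beta>, False)] [] y'" unfolding basic_homot_def using \<beta> by auto
    have "homot_step G J x (wu @ [(\<beta>, True), (\<beta>, False)] @ wt) w" unfolding homot_step_def
      using ww(1) bh ww(3) zy sp(1) ws0
      by (intro exI[of _ wu] exI[of _ wt] exI[of _ "[(\<beta>, True), (\<beta>, False)]"] exI[of _ "[]"]
          exI[of _ y'] exI[of _ y'] exI[of _ e]) simp
    moreover have "mapw fa (wu @ [(\<beta>, True), (\<beta>, False)] @ wt) = W1" using sp h(4) a(4) \<beta>(3) by simp
    ultimately show ?thesis using wk by blast
  next
    fix \<alpha> assume a: "\<alpha> \<in> arrs H" "y = tgt H \<alpha>" "z = y" "s = [(\<alpha>, False), (\<alpha>, True)]" "s' = []"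
    have ws0: "ws = []" using sp(3) a(5) by simp
    then have zy: "z' = y'" using ww(2) by simp
    obtain \<beta> where \<beta>: "\<beta> \<in> arrs G" "tgt G \<beta> = y'" "fa \<beta> = \<alpha>"
      using cov_in_surj[OF covq' y'v a(1)] a(2) yy by metis
    have sv: "src G \<beta> \<in> verts G" using wfG \<beta>(1) unfolding wf_quiver_def by blast
    have bw: "is_walk G y' [(\<beta>, False), (\<beta>, True)] y'" using \<beta> sv y'v by simp
    have wk: "is_walk G x (wu @ [(\<beta>, False), (\<beta>, True)] @ wt) e"
      using ww(1) bw ww(3) zy is_walk_appendI by metis
    have bh: "basic_homot G J y' [(\<beta>, False), (\<beta>, True)] [] y'" unfolding basic_homot_def using \<beta> by auto
    have "homot_step G J x (wu @ [(\<beta>, False), (\<beta>, True)] @ wt) w" unfolding homot_step_def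
      using ww(1) bh ww(3) zy sp(1) ws0
      by (intro exI[of _ wu] exI[of _ wt] exI[of _ "[(\<beta>, False), (\<beta>, True)]"] exI[of _ "[]"]
          exI[of _ y'] exI[of _ y'] exI[of _ e]) simp
    moreover have "mapw fa (wu @ [(\<beta>, False), (\<beta>, True)] @ wt) = W1" using sp h(4) a(4) \<beta>(3) by simp
    ultimately show ?thesis using wk by blast
  next
    fix \<rho> p1 p2 assume a: "minimal_rel H I y z \<rho>" "p1 \<in> supp \<rho>" "p2 \<in> supp \<rho>" "s = TT p1" "s' = TT p2"
    have q2: "ws = TT (map fst ws)" "map fa (map fst ws) = p2" using mapw_TT sp(3) a(5) by metis+
    have q2p: "is_path G y' (map fst ws) z'" using ww(2) q2(1) is_walk_TT by metis
    obtain q1 \<rho>' where L: "is_path G y' q1 z'" "map fa q1 = p1" "minimal_rel G J y' z' \<rho>'"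
      "map fst ws \<in> supp \<rho>'" "q1 \<in> supp \<rho>'"
      using lift_minimal[OF covr wfG qJ y'v q2p, of z \<rho> p1] a(1,2,3) yy q2(2) by blast
    have wk: "is_walk G x (wu @ TT q1 @ wt) e"
      using ww(1) ww(3) L(1) is_walk_TT is_walk_appendI by metis
    have bh: "basic_homot G J y' (TT q1) ws z'" unfolding basic_homot_def using L q2(1) by blast
    have "homot_step G J x (wu @ TT q1 @ wt) w" unfolding homot_step_def
      using ww(1) bh ww(3) sp(1)
      by (intro exI[of _ wu] exI[of _ wt] exI[of _ "TT q1"] exI[of _ ws] exI[of _ y'] exI[of _ z'] exI[of _ e]) simp
    moreover have "mapw fa (wu @ TT q1 @ wt) = W1"
      using sp h(4) a(4) L(2) by (simp only: map_append mapw_TT_eq)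
    ultimately show ?thesis using wk by blast
  qed
qed

lemma lift_homotopic:
  assumes w: "is_walk G x w e" and hm: "homotopic H I (fv x) (mapw fa w) V"
  shows "\<exists>w'. is_walk G x w' e \<and> mapw fa w' = V \<and> homotopic G J x w w'"
  using hm unfolding homotopic_def
proof (induction rule: rtranclp_induct)
  case base then show ?case using w homotopic_refl[of G J x w] unfolding homotopic_def by blast
next
  case (step b c)
  obtain wb where wb: "is_walk G x wb e" "mapw fa wb = b" "homotopic G J x w wb"
    using step.IH unfolding homotopic_def by blast
  from step.hyps(2) show ?case
  proof
    assume "homot_step H I (fv x) b c"
    then obtain wc where "is_walk G x wc e" "mapw fa wc = c" "homot_step G J x wb wc"
      using lift_fwd[OF wb(1)] wb(2) by blast
    then show ?thesis using wb(3) homot_step_homotopic homotopic_trans unfolding homotopic_def by metis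
  next
    assume "(homot_step H I (fv x))\<inverse>\<inverse> b c"
    then have "homot_step H I (fv x) c b" by simp
    then obtain wc where "is_walk G x wc e" "mapw fa wc = c" "homot_step G J x wc wb"
      using lift_bwd[OF wb(1)] wb(2) by blast
    then show ?thesis using wb(3) homot_step_homotopic homotopic_trans homotopic_sym
      unfolding homotopic_def by metis
  qed
qed

end




locale ucon =
  fixes Q :: "('v, 'a) quiver" and I :: "'v \<Rightarrow> 'v \<Rightarrow> ('a list \<Rightarrow> 'k::field) set" and b :: 'v
  assumes wfQ: "wf_quiver Q" and qI: "quiver_ideal Q I" and conQ: "connected_quiver Q" and bv: "b \<in> verts Q"
begin

lemma Isub: "\<forall>x y. I x y \<subseteq> kQ Q x y"
  using qI by (simp add: quiver_ideal_def)

definition rep :: "('a \<times> bool) list \<Rightarrow> ('a \<times> bool) list" where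
  "rep w = (SOME w'. homotopic Q I b w w')"

lemma rep_hom: "homotopic Q I b w (rep w)"
  unfolding rep_def by (rule someI[of _ w]) (rule homotopic_refl)

lemma rep_eq: assumes "homotopic Q I b w w'" shows "rep w = rep w'"
proof -
  have "(\<lambda>v. homotopic Q I b w v) = (\<lambda>v. homotopic Q I b w' v)"
  proof
    fix v show "homotopic Q I b w v = homotopic Q I b w' v"
      using assms homotopic_sym homotopic_trans by metis
  qed
  then show ?thesis unfolding rep_def by simp
qed

lemma rep_iff: "rep w = rep w' \<longleftrightarrow> homotopic Q I b w w'"
proof
  assume "rep w = rep w'"
  then show "homotopic Q I b w w'" using rep_hom[of w] rep_hom[of w'] homotopic_sym homotopic_trans by metis
qed (rule rep_eq)

lemma rep_walk: "is_walk Q b w e \<Longrightarrow> is_walk Q b (rep w) e"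
  using homotopic_walk[OF wfQ Isub rep_hom] by blast

definition V :: "('a \<times> bool) list set" where
  "V = {rep w | w. \<exists>e. is_walk Q b w e}"

lemma repV: "is_walk Q b w e \<Longrightarrow> rep w \<in> V"
  unfolding V_def by blast

lemma wend_rep: "is_walk Q b w e \<Longrightarrow> wend Q b (rep w) = e"
  using rep_walk is_walk_end by metis

lemma V_walk: "v \<in> V \<Longrightarrow> is_walk Q b v (wend Q b v)"
  unfolding V_def using rep_walk is_walk_end by fastforce

lemma V_rep: "v \<in> V \<Longrightarrow> rep v = v"
proof -
  assume "v \<in> V"
  then obtain w where "v = rep w" unfolding V_def by blast
  then show "rep v = v" using rep_eq[OF homotopic_sym[OF rep_hom[of w]]] by simp
qed

lemma wend_V: "v \<in> V \<Longrightarrow> wend Q b v \<in> verts Q"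
  using V_walk is_walk_verts by metis

lemma rep_app:
  assumes "is_walk Q b w e" "is_walk Q e t f"
  shows "rep (rep w @ t) = rep (w @ t)"
proof -
  have "homotopic Q I b (rep w) w" by (rule homotopic_sym[OF rep_hom])
  then have "homotopic Q I b (rep w @ t) (w @ t)"
    using homotopic_append[OF wfQ Isub _ rep_walk[OF assms(1)] assms(2)] by blast
  then show ?thesis by (rule rep_eq)
qed

lemma walk_snocT:
  assumes "v \<in> V" "\<alpha> \<in> arrs Q" "src Q \<alpha> = wend Q b v"
  shows "is_walk Q b (v @ [(\<alpha>, True)]) (tgt Q \<alpha>)"
proof -
  have "tgt Q \<alpha> \<in> verts Q" using wfQ assms(2) unfolding wf_quiver_def by blast
  then have "is_walk Q (wend Q b v) [(\<alpha>, True)] (tgt Q \<alpha>)" using assms(2,3) wend_V[OF assms(1)] by simp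
  then show ?thesis using V_walk[OF assms(1)] is_walk_appendI by metis
qed

lemma walk_snocF:
  assumes "v \<in> V" "\<alpha> \<in> arrs Q" "tgt Q \<alpha> = wend Q b v"
  shows "is_walk Q b (v @ [(\<alpha>, False)]) (src Q \<alpha>)"
proof -
  have "src Q \<alpha> \<in> verts Q" using wfQ assms(2) unfolding wf_quiver_def by blast
  then have "is_walk Q (wend Q b v) [(\<alpha>, False)] (src Q \<alpha>)" using assms(2,3) wend_V[OF assms(1)] by simp
  then show ?thesis using V_walk[OF assms(1)] is_walk_appendI by metis
qed

definition Qt :: "(('a \<times> bool) list, ('a \<times> bool) list \<times> 'a) quiver" where
  "Qt = \<lparr>verts = V, arrs = {(v, \<alpha>). v \<in> V \<and> \<alpha> \<in> arrs Q \<and> src Q \<alpha> = wend Q b v},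
         src = fst, tgt = (\<lambda>(v, \<alpha>). rep (v @ [(\<alpha>, True)]))\<rparr>"

lemma Qt_simps[simp]:
  "verts Qt = V" "arrs Qt = {(v, \<alpha>). v \<in> V \<and> \<alpha> \<in> arrs Q \<and> src Q \<alpha> = wend Q b v}"
  "src Qt = fst" "tgt Qt (v, \<alpha>) = rep (v @ [(\<alpha>, True)])"
  unfolding Qt_def by simp_all

lemma tgt_V: "v \<in> V \<Longrightarrow> \<alpha> \<in> arrs Q \<Longrightarrow> src Q \<alpha> = wend Q b v \<Longrightarrow> rep (v @ [(\<alpha>, True)]) \<in> V"
  using walk_snocT repV by metis

lemma wend_tgt: "v \<in> V \<Longrightarrow> \<alpha> \<in> arrs Q \<Longrightarrow> src Q \<alpha> = wend Q b v \<Longrightarrow> wend Q b (rep (v @ [(\<alpha>, True)])) = tgt Q \<alpha>"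
  using walk_snocT wend_rep by metis

lemma wf_Qt: "wf_quiver Qt"
  unfolding wf_quiver_def using tgt_V by auto

lemma cancel_TF: "v \<in> V \<Longrightarrow> \<alpha> \<in> arrs Q \<Longrightarrow> src Q \<alpha> = wend Q b v \<Longrightarrow> rep (v @ [(\<alpha>, True), (\<alpha>, False)]) = v"
proof -
  assume a: "v \<in> V" "\<alpha> \<in> arrs Q" "src Q \<alpha> = wend Q b v"
  have "homot_step Q I b (v @ [(\<alpha>, True), (\<alpha>, False)] @ []) (v @ [])"
  proof -
    have "is_walk Q (wend Q b v) [] (wend Q b v)" using wend_V[OF a(1)] by simp
    then show ?thesis by (rule homot_cancel_TF[OF V_walk[OF a(1)] a(2) a(3)])
  qed
  then have "rep (v @ [(\<alpha>, True), (\<alpha>, False)]) = rep v" using rep_eq homot_step_homotopic by (metis append_Nil2)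
  then show ?thesis using V_rep[OF a(1)] by simp
qed

lemma cancel_FT: "v \<in> V \<Longrightarrow> \<alpha> \<in> arrs Q \<Longrightarrow> tgt Q \<alpha> = wend Q b v \<Longrightarrow> rep (v @ [(\<alpha>, False), (\<alpha>, True)]) = v"
proof -
  assume a: "v \<in> V" "\<alpha> \<in> arrs Q" "tgt Q \<alpha> = wend Q b v"
  have "homot_step Q I b (v @ [(\<alpha>, False), (\<alpha>, True)] @ []) (v @ [])"
  proof -
    have "is_walk Q (wend Q b v) [] (wend Q b v)" using wend_V[OF a(1)] by simp
    then show ?thesis by (rule homot_cancel_FT[OF V_walk[OF a(1)] a(2) a(3)])
  qed
  then have "rep (v @ [(\<alpha>, False), (\<alpha>, True)]) = rep v" using rep_eq homot_step_homotopic by (metis append_Nil2)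
  then show ?thesis using V_rep[OF a(1)] by simp
qed

lemma covq_Qt: "covering_quiver Qt Q (wend Q b) snd"
  unfolding covering_quiver_def
proof (intro conjI ballI)
  fix x assume "x \<in> verts Qt" then show "wend Q b x \<in> verts Q" using wend_V by simp
next
  fix a assume "a \<in> arrs Qt"
  then obtain v \<alpha> where a: "a = (v, \<alpha>)" "v \<in> V" "\<alpha> \<in> arrs Q" "src Q \<alpha> = wend Q b v" by auto
  show "snd a \<in> arrs Q" using a by simp
  show "src Q (snd a) = wend Q b (src Qt a)" using a by simp
  show "tgt Q (snd a) = wend Q b (tgt Qt a)" using a wend_tgt by simp
next
  fix x assume x: "x \<in> verts Qt"
  show "bij_betw snd {\<alpha> \<in> arrs Qt. src Qt \<alpha> = x} {\<beta> \<in> arrs Q. src Q \<beta> = wend Q b x}"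
  proof (rule bij_betw_imageI)
    show "inj_on snd {\<alpha> \<in> arrs Qt. src Qt \<alpha> = x}" by (rule inj_onI) auto
    show "snd ` {\<alpha> \<in> arrs Qt. src Qt \<alpha> = x} = {\<beta> \<in> arrs Q. src Q \<beta> = wend Q b x}"
    proof (intro Set.set_eqI iffI)
      fix \<beta> assume "\<beta> \<in> {\<beta> \<in> arrs Q. src Q \<beta> = wend Q b x}"
      then have "(x, \<beta>) \<in> {\<alpha> \<in> arrs Qt. src Qt \<alpha> = x}" using x by simp
      then show "\<beta> \<in> snd ` {\<alpha> \<in> arrs Qt. src Qt \<alpha> = x}" by force
    qed auto
  qed
  show "bij_betw snd {\<alpha> \<in> arrs Qt. tgt Qt \<alpha> = x} {\<beta> \<in> arrs Q. tgt Q \<beta> = wend Q b x}"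
  proof (rule bij_betw_imageI)
    show "inj_on snd {\<alpha> \<in> arrs Qt. tgt Qt \<alpha> = x}"
    proof (rule inj_onI)
      fix a1 a2 assume a1: "a1 \<in> {\<alpha> \<in> arrs Qt. tgt Qt \<alpha> = x}" and a2: "a2 \<in> {\<alpha> \<in> arrs Qt. tgt Qt \<alpha> = x}"
        and eq: "snd a1 = snd a2"
      obtain u1 \<alpha> where u1: "a1 = (u1, \<alpha>)" "u1 \<in> V" "\<alpha> \<in> arrs Q" "src Q \<alpha> = wend Q b u1"
        "rep (u1 @ [(\<alpha>, True)]) = x" using a1 by auto
      obtain u2 where u2: "a2 = (u2, \<alpha>)" "u2 \<in> V" "src Q \<alpha> = wend Q b u2"
        "rep (u2 @ [(\<alpha>, True)]) = x" using a2 eq u1(1) by auto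
      have "homotopic Q I b (u1 @ [(\<alpha>, True)]) (u2 @ [(\<alpha>, True)])" using u1(5) u2(4) rep_iff by metis
      moreover have "is_walk Q (tgt Q \<alpha>) [(\<alpha>, False)] (src Q \<alpha>)"
        using u1(3) wfQ unfolding wf_quiver_def by simp
      ultimately have "homotopic Q I b (u1 @ [(\<alpha>, True)] @ [(\<alpha>, False)]) (u2 @ [(\<alpha>, True)] @ [(\<alpha>, False)])"
        using homotopic_append[OF wfQ Isub _ walk_snocT[OF u1(2,3,4)]] by fastforce
      then have "rep (u1 @ [(\<alpha>, True), (\<alpha>, False)]) = rep (u2 @ [(\<alpha>, True), (\<alpha>, False)])"
        using rep_eq by simp
      then have "u1 = u2" using cancel_TF[OF u1(2,3,4)] cancel_TF[OF u2(2) u1(3) u2(3)] by simp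
      then show "a1 = a2" using u1(1) u2(1) by simp
    qed
    show "snd ` {\<alpha> \<in> arrs Qt. tgt Qt \<alpha> = x} = {\<beta> \<in> arrs Q. tgt Q \<beta> = wend Q b x}"
    proof (intro Set.set_eqI iffI)
      fix \<beta> assume "\<beta> \<in> snd ` {\<alpha> \<in> arrs Qt. tgt Qt \<alpha> = x}"
      then obtain u where u: "(u, \<beta>) \<in> arrs Qt" "tgt Qt (u, \<beta>) = x" by force
      then show "\<beta> \<in> {\<beta> \<in> arrs Q. tgt Q \<beta> = wend Q b x}" using wend_tgt by auto
    next
      fix \<beta> assume "\<beta> \<in> {\<beta> \<in> arrs Q. tgt Q \<beta> = wend Q b x}"
      then have \<beta>: "\<beta> \<in> arrs Q" "tgt Q \<beta> = wend Q b x" by simp_all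
      have xV: "x \<in> V" using x by simp
      define u where "u = rep (x @ [(\<beta>, False)])"
      have wsF: "is_walk Q b (x @ [(\<beta>, False)]) (src Q \<beta>)" using walk_snocF[OF xV \<beta>] .
      have uV: "u \<in> V" unfolding u_def using repV[OF wsF] .
      have wu: "wend Q b u = src Q \<beta>" unfolding u_def using wend_rep[OF wsF] .
      have "is_walk Q (src Q \<beta>) [(\<beta>, True)] (tgt Q \<beta>)"
        using \<beta>(1) wfQ unfolding wf_quiver_def by simp
      then have "rep (u @ [(\<beta>, True)]) = rep (x @ [(\<beta>, False)] @ [(\<beta>, True)])"
        unfolding u_def using rep_app[OF wsF] by simp
      also have "\<dots> = x" using cancel_FT[OF xV \<beta>] by simp
      finally have "(u, \<beta>) \<in> {\<alpha> \<in> arrs Qt. tgt Qt \<alpha> = x}" using uV \<beta>(1) wu by simp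
      then show "\<beta> \<in> snd ` {\<alpha> \<in> arrs Qt. tgt Qt \<alpha> = x}" by force
    qed
  qed
qed


fun liftp :: "('a \<times> bool) list \<Rightarrow> 'a list \<Rightarrow> (('a \<times> bool) list \<times> 'a) list" where
  "liftp v [] = []"
| "liftp v (\<alpha> # p) = (v, \<alpha>) # liftp (rep (v @ [(\<alpha>, True)])) p"

lemma path_lift:
  "v \<in> V \<Longrightarrow> is_path Q (wend Q b v) p e \<Longrightarrow>
     is_path Qt v (liftp v p) (rep (v @ TT p)) \<and> map snd (liftp v p) = p"
proof (induction p arbitrary: v)
  case Nil then show ?case using V_rep by simp
next
  case (Cons \<alpha> p)
  have a: "\<alpha> \<in> arrs Q" "src Q \<alpha> = wend Q b v" "is_path Q (tgt Q \<alpha>) p e" using Cons.prems by auto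
  define v' where "v' = rep (v @ [(\<alpha>, True)])"
  have v'V: "v' \<in> V" unfolding v'_def using tgt_V[OF Cons.prems(1) a(1,2)] .
  have wv': "wend Q b v' = tgt Q \<alpha>" unfolding v'_def using wend_tgt[OF Cons.prems(1) a(1,2)] .
  have IH: "is_path Qt v' (liftp v' p) (rep (v' @ TT p)) \<and> map snd (liftp v' p) = p"
    using Cons.IH[OF v'V] a(3) wv' by simp
  have "rep (v' @ TT p) = rep ((v @ [(\<alpha>, True)]) @ TT p)"
    unfolding v'_def by (rule rep_app[OF walk_snocT[OF Cons.prems(1) a(1,2)], of "TT p" e]) (simp add: is_walk_TT a(3))
  then have "rep (v' @ TT p) = rep (v @ TT (\<alpha> # p))" by simp
  then show ?case using IH Cons.prems(1) a(1,2) v'_def by simp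
qed

lemma path_unique_lift:
  "v \<in> V \<Longrightarrow> is_path Qt v q y \<Longrightarrow> q = liftp v (map snd q) \<and> y = rep (v @ TT (map snd q))"
proof (induction q arbitrary: v)
  case Nil then show ?case using V_rep by simp
next
  case (Cons a q)
  obtain u \<alpha> where a: "a = (u, \<alpha>)" by fastforce
  have h: "u = v" "\<alpha> \<in> arrs Q" "src Q \<alpha> = wend Q b v" "is_path Qt (rep (v @ [(\<alpha>, True)])) q y"
    using Cons.prems a by auto
  define v' where "v' = rep (v @ [(\<alpha>, True)])"
  have v'V: "v' \<in> V" unfolding v'_def using tgt_V[OF Cons.prems(1) h(2,3)] .
  have wv': "wend Q b v' = tgt Q \<alpha>" unfolding v'_def using wend_tgt[OF Cons.prems(1) h(2,3)] .
  have IH: "q = liftp v' (map snd q) \<and> y = rep (v' @ TT (map snd q))"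
    using Cons.IH[OF v'V] h(4) v'_def by simp
  have "is_path Q (wend Q b v') (map snd q) (wend Q b y)"
    using cov_path[OF covq_Qt] h(4) v'_def by metis
  then have "rep (v' @ TT (map snd q)) = rep ((v @ [(\<alpha>, True)]) @ TT (map snd q))"
    unfolding v'_def using rep_app[OF walk_snocT[OF Cons.prems(1) h(2,3)]] wv' v'_def is_walk_TT by metis
  then show ?case using IH a h(1) v'_def by simp
qed

definition lft :: "('a \<times> bool) list \<Rightarrow> ('a \<times> bool) list \<Rightarrow> ('a list \<Rightarrow> 'k) \<Rightarrow> ((('a \<times> bool) list \<times> 'a) list \<Rightarrow> 'k)" where
  "lft v y f = (\<lambda>q. if is_path Qt v q y then f (map snd q) else 0)"

lemma inj_paths: "v \<in> V \<Longrightarrow> inj_on (map snd) {q. \<exists>y. is_path Qt v q y}"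
proof (rule inj_onI)
  fix q q' assume v: "v \<in> V" and q: "q \<in> {q. \<exists>y. is_path Qt v q y}" and q': "q' \<in> {q. \<exists>y. is_path Qt v q y}"
    and eq: "map snd q = map snd q'"
  obtain y where y: "is_path Qt v q y" using q by blast
  obtain y' where y': "is_path Qt v q' y'" using q' by blast
  have "q = liftp v (map snd q)" using path_unique_lift[OF v y] by simp
  moreover have "q' = liftp v (map snd q')" using path_unique_lift[OF v y'] by simp
  ultimately show "q = q'" using eq by simp
qed

lemma supp_lft: "supp (lft v y f) = {q. is_path Qt v q y \<and> map snd q \<in> supp f}"
  unfolding lft_def supp_def by auto

lemma lft_kQ:
  assumes "v \<in> V" "finite (supp f)"
  shows "lft v y f \<in> kQ Qt v y"
proof -
  have inj: "inj_on (map snd) (supp (lft v y f))"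
    using inj_paths[OF assms(1)] unfolding supp_lft by (rule inj_on_subset) blast
  have "map snd ` supp (lft v y f) \<subseteq> supp f" unfolding supp_lft by blast
  then have "finite (supp (lft v y f))" using inj_on_finite[OF inj] assms(2) by blast
  moreover have "\<forall>q\<in>supp (lft v y f). is_path Qt v q y" unfolding supp_lft by blast
  ultimately show ?thesis unfolding kQ_def by blast
qed

lemma lft_kmap:
  assumes vV: "v \<in> V" and fk: "f \<in> kQ Q (wend Q b v) b'"
  shows "kmap snd (lft v y f) = (\<lambda>p. if rep (v @ TT p) = y then f p else 0)"
proof
  fix p
  have inj: "inj_on (map snd) (supp (lft v y f))"
    using inj_paths[OF vV] unfolding supp_lft by (rule inj_on_subset) blast
  show "kmap snd (lft v y f) p = (if rep (v @ TT p) = y then f p else 0)"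
  proof (cases "p \<in> supp f")
    case True
    have pp: "is_path Q (wend Q b v) p b'" using kQ_path[OF fk True] .
    have L: "is_path Qt v (liftp v p) (rep (v @ TT p))" "map snd (liftp v p) = p"
      using path_lift[OF vV pp] by simp_all
    show ?thesis
    proof (cases "rep (v @ TT p) = y")
      case True
      then have "liftp v p \<in> supp (lft v y f)" using L \<open>p \<in> supp f\<close> unfolding supp_lft by simp
      then have "kmap snd (lft v y f) (map snd (liftp v p)) = lft v y f (liftp v p)"
        by (rule kmap_inj_app[OF inj])
      then show ?thesis using L True unfolding lft_def by simp
    next
      case False
      have "p \<notin> map snd ` supp (lft v y f)"
      proof
        assume "p \<in> map snd ` supp (lft v y f)"
        then obtain q where q: "is_path Qt v q y" "map snd q = p" unfolding supp_lft by blast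
        then show False using path_unique_lift[OF vV q(1)] False by simp
      qed
      then show ?thesis using False kmap_notin by metis
    qed
  next
    case False
    have "p \<notin> map snd ` supp (lft v y f)" using False unfolding supp_lft by blast
    then have "kmap snd (lft v y f) p = 0" by (rule kmap_notin)
    moreover have "f p = 0" using False by (simp add: supp_def)
    ultimately show ?thesis by simp
  qed
qed

definition It :: "('a \<times> bool) list \<Rightarrow> ('a \<times> bool) list \<Rightarrow> ((('a \<times> bool) list \<times> 'a) list \<Rightarrow> 'k) set" where
  "It x y = {f \<in> kQ Qt x y. kmap snd f \<in> I (wend Q b x) (wend Q b y)}"

lemma qI_rmul: "f \<in> I x y \<Longrightarrow> is_path Q y q z \<Longrightarrow> rmul f q \<in> I x z"
  using qI unfolding quiver_ideal_def by blast

lemma qI_lmul: "f \<in> I x y \<Longrightarrow> is_path Q w q x \<Longrightarrow> lmul q f \<in> I w y"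
  using qI unfolding quiver_ideal_def by blast

lemma qI_nil: "f \<in> I x x \<Longrightarrow> f [] = 0"
  using qI unfolding quiver_ideal_def by blast

lemma quiver_ideal_It: "quiver_ideal Qt It"
  unfolding quiver_ideal_def
proof (intro conjI allI impI)
  fix x y show "It x y \<subseteq> kQ Qt x y" unfolding It_def by blast
next
  fix x y show "(\<lambda>_. 0) \<in> It x y" unfolding It_def mem_Collect_eq kmap_zero
    by (intro conjI kQ_zero ideal_zero[OF qI])
next
  fix x y f g assume "f \<in> It x y" "g \<in> It x y"
  then have f: "f \<in> kQ Qt x y" "kmap snd f \<in> I (wend Q b x) (wend Q b y)"
    and g: "g \<in> kQ Qt x y" "kmap snd g \<in> I (wend Q b x) (wend Q b y)" unfolding It_def by simp_all
  have "kmap snd (\<lambda>u. f u + g u) = (\<lambda>u'. kmap snd f u' + kmap snd g u')"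
    by (rule kmap_add[OF kQ_finite[OF f(1)] kQ_finite[OF g(1)]])
  then show "(\<lambda>u. f u + g u) \<in> It x y" unfolding It_def
    using kQ_add[OF f(1) g(1)] ideal_add[OF qI f(2) g(2)] by simp
next
  fix x y c f assume "f \<in> It x y"
  then have f: "f \<in> kQ Qt x y" "kmap snd f \<in> I (wend Q b x) (wend Q b y)" unfolding It_def by simp_all
  show "(\<lambda>u. c * f u) \<in> It x y" unfolding It_def
    using kQ_smult[OF f(1)] ideal_smult[OF qI f(2)] kmap_smult[of snd c f] by simp
next
  fix x y z f q assume "f \<in> It x y" "is_path Qt y q z"
  then have f: "f \<in> kQ Qt x y" "kmap snd f \<in> I (wend Q b x) (wend Q b y)" and q: "is_path Qt y q z"
    unfolding It_def by simp_all
  have "is_path Q (wend Q b y) (map snd q) (wend Q b z)" using cov_path[OF covq_Qt q] .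
  then show "rmul f q \<in> It x z" unfolding It_def
    using kQ_rmul[OF f(1) q] qI_rmul[OF f(2)] kmap_rmul[of snd f q] by simp
next
  fix w x y f q assume "f \<in> It x y" "is_path Qt w q x"
  then have f: "f \<in> kQ Qt x y" "kmap snd f \<in> I (wend Q b x) (wend Q b y)" and q: "is_path Qt w q x"
    unfolding It_def by simp_all
  have "is_path Q (wend Q b w) (map snd q) (wend Q b x)" using cov_path[OF covq_Qt q] .
  then show "lmul q f \<in> It w y" unfolding It_def
    using kQ_lmul[OF f(1) q] qI_lmul[OF f(2)] kmap_lmul[of snd q f] by simp
next
  fix x f assume "f \<in> It x x"
  then have "kmap snd f \<in> I (wend Q b x) (wend Q b x)" unfolding It_def by simp
  then have "kmap snd f [] = 0" by (rule qI_nil)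
  then show "f [] = 0" by (simp add: kmap_nil)
qed


fun liftw :: "('a \<times> bool) list \<Rightarrow> ('a \<times> bool) list \<Rightarrow> ((('a \<times> bool) list \<times> 'a) \<times> bool) list" where
  "liftw v [] = []"
| "liftw v ((\<alpha>, d) # w) = (if d then ((v, \<alpha>), True) # liftw (rep (v @ [(\<alpha>, True)])) w
     else ((rep (v @ [(\<alpha>, False)]), \<alpha>), False) # liftw (rep (v @ [(\<alpha>, False)])) w)"

lemma walk_lift:
  "v \<in> V \<Longrightarrow> is_walk Q (wend Q b v) w e \<Longrightarrow> is_walk Qt v (liftw v w) (rep (v @ w))"
proof (induction w arbitrary: v)
  case Nil then show ?case using V_rep by simp
next
  case (Cons ad w)
  obtain \<alpha> d where ad: "ad = (\<alpha>, d)" by fastforce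
  show ?case
  proof (cases d)
    case True
    have a: "\<alpha> \<in> arrs Q" "src Q \<alpha> = wend Q b v" "is_walk Q (tgt Q \<alpha>) w e" using Cons.prems ad True by auto
    define v' where "v' = rep (v @ [(\<alpha>, True)])"
    have v'V: "v' \<in> V" unfolding v'_def using tgt_V[OF Cons.prems(1) a(1,2)] .
    have wv': "wend Q b v' = tgt Q \<alpha>" unfolding v'_def using wend_tgt[OF Cons.prems(1) a(1,2)] .
    have IH: "is_walk Qt v' (liftw v' w) (rep (v' @ w))" using Cons.IH[OF v'V] a(3) wv' by simp
    have "rep (v' @ w) = rep ((v @ [(\<alpha>, True)]) @ w)"
      unfolding v'_def by (rule rep_app[OF walk_snocT[OF Cons.prems(1) a(1,2)] a(3)])
    then show ?thesis using IH Cons.prems(1) a(1,2) v'_def ad True by simp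
  next
    case False
    have a: "\<alpha> \<in> arrs Q" "tgt Q \<alpha> = wend Q b v" "is_walk Q (src Q \<alpha>) w e" using Cons.prems ad False by auto
    define v' where "v' = rep (v @ [(\<alpha>, False)])"
    have wsF: "is_walk Q b (v @ [(\<alpha>, False)]) (src Q \<alpha>)" using walk_snocF[OF Cons.prems(1) a(1,2)] .
    have v'V: "v' \<in> V" unfolding v'_def using repV[OF wsF] .
    have wv': "wend Q b v' = src Q \<alpha>" unfolding v'_def using wend_rep[OF wsF] .
    have IH: "is_walk Qt v' (liftw v' w) (rep (v' @ w))" using Cons.IH[OF v'V] a(3) wv' by simp
    have "rep (v' @ w) = rep ((v @ [(\<alpha>, False)]) @ w)"
      unfolding v'_def by (rule rep_app[OF wsF a(3)])
    moreover have "tgt Qt (v', \<alpha>) = v"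
    proof -
      have "is_walk Q (src Q \<alpha>) [(\<alpha>, True)] (tgt Q \<alpha>)" using a(1) wfQ unfolding wf_quiver_def by simp
      then have "rep (v' @ [(\<alpha>, True)]) = rep ((v @ [(\<alpha>, False)]) @ [(\<alpha>, True)])"
        unfolding v'_def by (rule rep_app[OF wsF])
      then show ?thesis using cancel_FT[OF Cons.prems(1) a(1,2)] by simp
    qed
    moreover have "(v', \<alpha>) \<in> arrs Qt" using v'V a(1) wv' by simp
    ultimately show ?thesis using IH Cons.prems(1) v'_def ad False by simp
  qed
qed

lemma rep_nil_V: "rep [] \<in> V" and wend_rep_nil: "wend Q b (rep []) = b"
  using repV[of "[]" b] wend_rep[of "[]" b] bv by simp_all

lemma from_base: "v \<in> V \<Longrightarrow> \<exists>w. is_walk Qt (rep []) w v"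
proof -
  assume vV: "v \<in> V"
  have "is_walk Q (wend Q b (rep [])) v (wend Q b v)" using V_walk[OF vV] wend_rep_nil by simp
  then have "is_walk Qt (rep []) (liftw (rep []) v) (rep (rep [] @ v))" by (rule walk_lift[OF rep_nil_V])
  moreover have "rep (rep [] @ v) = v"
  proof -
    have "is_walk Q b [] b" using bv by simp
    then have "rep (rep [] @ v) = rep ([] @ v)" using rep_app V_walk[OF vV] by metis
    then show ?thesis using V_rep[OF vV] by simp
  qed
  ultimately show ?thesis by metis
qed

lemma connected_Qt: "connected_quiver Qt"
  unfolding connected_quiver_def
proof (intro conjI ballI)
  show "verts Qt \<noteq> {}" using rep_nil_V by auto
next
  fix x y assume "x \<in> verts Qt" "y \<in> verts Qt"
  then obtain w1 w2 where w1: "is_walk Qt (rep []) w1 x" and w2: "is_walk Qt (rep []) w2 y"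
    using from_base by (metis Qt_simps(1))
  have "is_walk Qt x (revw w1) (rep [])" using is_walk_revw[OF wf_Qt w1] .
  then show "\<exists>w. is_walk Qt x w y" using w2 is_walk_appendI by metis
qed

lemma same_class:
  assumes xV: "x \<in> V" and wx: "wend Q b x = a'" and m: "minimal_rel Q I a' b' \<rho>"
    and p1: "p1 \<in> supp \<rho>" and p2: "p2 \<in> supp \<rho>"
  shows "rep (x @ TT p1) = rep (x @ TT p2)"
proof -
  have \<rho>I: "\<rho> \<in> I a' b'" using m unfolding minimal_rel_def by simp
  have pp: "is_path Q a' p1 b'" using ideal_path[OF qI \<rho>I p1] .
  have av: "a' \<in> verts Q" "b' \<in> verts Q" using is_path_verts[OF pp] by simp_all
  have bh: "basic_homot Q I a' (TT p1) (TT p2) b'" unfolding basic_homot_def using m p1 p2 by blast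
  have "homot_step Q I a' ([] @ TT p1 @ []) ([] @ TT p2 @ [])" unfolding homot_step_def
    using av bh by (intro exI[of _ "[]"] exI[of _ "[]"] exI[of _ "TT p1"] exI[of _ "TT p2"]
        exI[of _ a'] exI[of _ b'] exI[of _ b']) simp
  then have "homotopic Q I a' (TT p1) (TT p2)" using homot_step_homotopic by fastforce
  then have "homotopic Q I b (x @ TT p1) (x @ TT p2)"
    using homotopic_prepend V_walk[OF xV] wx by metis
  then show ?thesis by (rule rep_eq)
qed

lemma class_restrict:
  assumes xV: "x \<in> V" and wx: "wend Q b x = a'" and fI: "f \<in> I a' b'"
  shows "(\<lambda>p. if rep (x @ TT p) = y then f p else 0) \<in> I a' b'"
proof -
  have "restrict_to f {p. rep (x @ TT p) = y} \<in> I a' b'"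
  proof (rule ideal_restrict[OF qI fI], intro allI impI)
    fix \<rho> assume a: "minimal_rel Q I a' b' \<rho> \<and> supp \<rho> \<subseteq> supp f"
    show "supp \<rho> \<subseteq> {p. rep (x @ TT p) = y} \<or> supp \<rho> \<inter> {p. rep (x @ TT p) = y} = {}"
    proof (cases "supp \<rho> \<inter> {p. rep (x @ TT p) = y} = {}")
      case False
      then obtain p0 where p0: "p0 \<in> supp \<rho>" "rep (x @ TT p0) = y" by blast
      have "supp \<rho> \<subseteq> {p. rep (x @ TT p) = y}"
      proof
        fix p assume "p \<in> supp \<rho>"
        then have "rep (x @ TT p) = rep (x @ TT p0)" using same_class[OF xV wx _ _ p0(1)] a by blast
        then show "p \<in> {p. rep (x @ TT p) = y}" using p0(2) by simp
      qed
      then show ?thesis by simp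
    qed simp
  qed
  moreover have "restrict_to f {p. rep (x @ TT p) = y} = (\<lambda>p. if rep (x @ TT p) = y then f p else 0)"
    unfolding restrict_to_def by simp
  ultimately show ?thesis by simp
qed

lemma end_class:
  assumes xV: "x \<in> V" and wx: "wend Q b x = a'" and pp: "is_path Q a' p b'"
  shows "rep (x @ TT p) \<in> V" "wend Q b (rep (x @ TT p)) = b'"
proof -
  have "is_walk Q b (x @ TT p) b'" using V_walk[OF xV] wx pp is_walk_TT is_walk_appendI by metis
  then show "rep (x @ TT p) \<in> V" "wend Q b (rep (x @ TT p)) = b'" using repV wend_rep by blast+
qed

lemma I_decomp:
  assumes fI: "f \<in> I a' b'"
  shows "f \<in> fsums (\<Union>{kmap snd ` It x y | x y. x \<in> verts Qt \<and> y \<in> verts Qt \<and> wend Q b x = a' \<and> wend Q b y = b'})"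
    (is "f \<in> fsums ?U")
proof (cases "supp f = {}")
  case True
  then have "f = (\<lambda>_. 0)" by (rule supp_empty)
  then show ?thesis by (simp add: fsums.zero)
next
  case False
  then obtain p0 where p0: "p0 \<in> supp f" by blast
  have fk: "f \<in> kQ Q a' b'" using ideal_kQ[OF qI fI] .
  have fin: "finite (supp f)" using kQ_finite[OF fk] .
  have "a' \<in> verts Q" using is_path_verts[OF kQ_path[OF fk p0]] by simp
  then obtain w0 where w0: "is_walk Q b w0 a'" using conQ bv unfolding connected_quiver_def by blast
  define x where "x = rep w0"
  have xV: "x \<in> V" unfolding x_def using repV[OF w0] .
  have wx: "wend Q b x = a'" unfolding x_def using wend_rep[OF w0] .
  define Y where "Y = (\<lambda>p. rep (x @ TT p)) ` supp f"
  have finY: "finite Y" unfolding Y_def using fin by simp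
  have inU: "\<forall>y\<in>Y. kmap snd (lft x y f) \<in> ?U"
  proof
    fix y assume "y \<in> Y"
    then obtain p where p: "p \<in> supp f" "y = rep (x @ TT p)" unfolding Y_def by blast
    have pp: "is_path Q a' p b'" using kQ_path[OF fk p(1)] .
    have yV: "y \<in> V" and wy: "wend Q b y = b'" using end_class[OF xV wx pp] p(2) by simp_all
    have k: "kmap snd (lft x y f) = (\<lambda>p. if rep (x @ TT p) = y then f p else 0)"
      using lft_kmap[OF xV] fk wx by simp
    have "lft x y f \<in> It x y" unfolding It_def
      using lft_kQ[OF xV fin] class_restrict[OF xV wx fI, of y] k wx wy by simp
    then have "kmap snd (lft x y f) \<in> kmap snd ` It x y" by simp
    then show "kmap snd (lft x y f) \<in> ?U" using xV yV wx wy by auto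
  qed
  have "(\<lambda>u. \<Sum>y\<in>Y. kmap snd (lft x y f) u) \<in> fsums ?U" by (rule fsums_sum[OF finY inU])
  moreover have "(\<lambda>u. \<Sum>y\<in>Y. kmap snd (lft x y f) u) = f"
  proof
    fix u
    have "(\<Sum>y\<in>Y. kmap snd (lft x y f) u) = (\<Sum>y\<in>Y. if rep (x @ TT u) = y then f u else 0)"
      using lft_kmap[OF xV] fk wx by simp
    also have "\<dots> = (if rep (x @ TT u) \<in> Y then f u else 0)" using finY by (simp add: sum.delta)
    also have "\<dots> = f u" unfolding Y_def by (auto simp: supp_def)
    finally show "(\<Sum>y\<in>Y. kmap snd (lft x y f) u) = f u" .
  qed
  ultimately show ?thesis by simp
qed

lemma rel_lift:
  assumes \<rho>I: "\<rho> \<in> I a' b'" and xV: "x \<in> V" and wx: "wend Q b x = a'"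
    and same: "\<forall>p\<in>supp \<rho>. rep (x @ TT p) = rep (x @ TT p0)" and p0: "p0 \<in> supp \<rho>"
  shows "rep (x @ TT p0) \<in> V \<and> wend Q b (rep (x @ TT p0)) = b' \<and>
         lft x (rep (x @ TT p0)) \<rho> \<in> It x (rep (x @ TT p0)) \<and> kmap snd (lft x (rep (x @ TT p0)) \<rho>) = \<rho>"
proof -
  have fk: "\<rho> \<in> kQ Q a' b'" using ideal_kQ[OF qI \<rho>I] .
  have pp: "is_path Q a' p0 b'" using kQ_path[OF fk p0] .
  note ec = end_class[OF xV wx pp]
  have k: "kmap snd (lft x (rep (x @ TT p0)) \<rho>) = \<rho>"
  proof
    fix p
    have "kmap snd (lft x (rep (x @ TT p0)) \<rho>) p = (if rep (x @ TT p) = rep (x @ TT p0) then \<rho> p else 0)"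
      using lft_kmap[OF xV] fk wx by simp
    also have "\<dots> = \<rho> p" using same by (auto simp: supp_def)
    finally show "kmap snd (lft x (rep (x @ TT p0)) \<rho>) p = \<rho> p" .
  qed
  have "lft x (rep (x @ TT p0)) \<rho> \<in> It x (rep (x @ TT p0))" unfolding It_def
    using lft_kQ[OF xV kQ_finite[OF fk]] k \<rho>I wx ec by simp
  then show ?thesis using ec k by simp
qed

lemma covr_Qt: "covering_rel Qt It Q I (wend Q b) snd"
  unfolding covering_rel_def
proof (intro conjI allI impI)
  show "covering_quiver Qt Q (wend Q b) snd" by (rule covq_Qt)
next
  fix a' b'
  show "I a' b' = fsums (\<Union>{kmap snd ` It x y | x y. x \<in> verts Qt \<and> y \<in> verts Qt \<and> wend Q b x = a' \<and> wend Q b y = b'})"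
  proof
    show "I a' b' \<subseteq> fsums (\<Union>{kmap snd ` It x y | x y. x \<in> verts Qt \<and> y \<in> verts Qt \<and> wend Q b x = a' \<and> wend Q b y = b'})"
      using I_decomp by blast
    have "\<Union>{kmap snd ` It x y | x y. x \<in> verts Qt \<and> y \<in> verts Qt \<and> wend Q b x = a' \<and> wend Q b y = b'} \<subseteq> I a' b'"
      unfolding It_def by blast
    then show "fsums (\<Union>{kmap snd ` It x y | x y. x \<in> verts Qt \<and> y \<in> verts Qt \<and> wend Q b x = a' \<and> wend Q b y = b'}) \<subseteq> I a' b'"
      by (rule fsums_sub[OF qI])
  qed
next
  fix a' b' \<rho>' assume mz: "minimal_rel Q I a' b' \<rho>' \<or> zero_rel Q I a' b' \<rho>'"
  have \<rho>I: "\<rho>' \<in> I a' b'" using mz unfolding minimal_rel_def zero_rel_def by blast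
  have "card (supp \<rho>') \<ge> 1" using mz unfolding minimal_rel_def zero_rel_def by auto
  then have "supp \<rho>' \<noteq> {}" by auto
  then obtain p0 where p0: "p0 \<in> supp \<rho>'" by blast
  have fk: "\<rho>' \<in> kQ Q a' b'" using ideal_kQ[OF qI \<rho>I] .
  have pp: "is_path Q a' p0 b'" using kQ_path[OF fk p0] .
  have same: "\<forall>p\<in>supp \<rho>'. rep (x @ TT p) = rep (x @ TT p0)" if xV: "x \<in> V" and wx: "wend Q b x = a'" for x
  proof
    fix p assume p: "p \<in> supp \<rho>'"
    from mz show "rep (x @ TT p) = rep (x @ TT p0)"
    proof
      assume "minimal_rel Q I a' b' \<rho>'"
      then show ?thesis using same_class[OF xV wx _ p p0] by simp
    next
      assume "zero_rel Q I a' b' \<rho>'"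
      then have "card (supp \<rho>') = 1" unfolding zero_rel_def by simp
      then obtain q where "supp \<rho>' = {q}" using card_1_singletonE by blast
      then show ?thesis using p p0 by simp
    qed
  qed
  show "\<forall>a\<in>verts Qt. wend Q b a = a' \<longrightarrow> (\<exists>c\<in>verts Qt. wend Q b c = b' \<and> (\<exists>\<rho>\<in>It a c. kmap snd \<rho> = \<rho>'))"
  proof (intro ballI impI)
    fix x assume "x \<in> verts Qt" "wend Q b x = a'"
    then have xV: "x \<in> V" and wx: "wend Q b x = a'" by simp_all
    show "\<exists>y\<in>verts Qt. wend Q b y = b' \<and> (\<exists>\<rho>\<in>It x y. kmap snd \<rho> = \<rho>')"
      using rel_lift[OF \<rho>I xV wx same[OF xV wx] p0] by auto
  qed
  show "\<forall>y\<in>verts Qt. wend Q b y = b' \<longrightarrow> (\<exists>a\<in>verts Qt. wend Q b a = a' \<and> (\<exists>\<rho>\<in>It a y. kmap snd \<rho> = \<rho>'))"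
  proof (intro ballI impI)
    fix y assume "y \<in> verts Qt" "wend Q b y = b'"
    then have yV: "y \<in> V" and wy: "wend Q b y = b'" by simp_all
    define w1 where "w1 = y @ map (\<lambda>a. (a, False)) (rev p0)"
    have ww1: "is_walk Q b w1 a'" unfolding w1_def
      using V_walk[OF yV] wy is_walk_rev_path[OF pp] is_walk_appendI by metis
    define x where "x = rep w1"
    have xV: "x \<in> V" unfolding x_def using repV[OF ww1] .
    have wx: "wend Q b x = a'" unfolding x_def using wend_rep[OF ww1] .
    have "rep (x @ TT p0) = rep (w1 @ TT p0)"
      unfolding x_def using rep_app[OF ww1] pp is_walk_TT by metis
    also have "\<dots> = rep y"
    proof -
      have yw: "is_walk Q b y b'" using V_walk[OF yV] wy by simp
      have "homotopic Q I b (y @ map (\<lambda>a. (a, False)) (rev p0) @ TT p0) y" using homot_cancel_path[OF yw pp] .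
      then show ?thesis unfolding w1_def using rep_eq by simp
    qed
    also have "\<dots> = y" using V_rep[OF yV] .
    finally have xy: "rep (x @ TT p0) = y" .
    show "\<exists>x\<in>verts Qt. wend Q b x = a' \<and> (\<exists>\<rho>\<in>It x y. kmap snd \<rho> = \<rho>')"
      using rel_lift[OF \<rho>I xV wx same[OF xV wx] p0] xy xV wx by auto
  qed
qed

lemma walk_end_rep:
  "v \<in> V \<Longrightarrow> is_walk Qt v W y \<Longrightarrow> y = rep (v @ mapw snd W)"
proof (induction W arbitrary: v)
  case Nil then show ?case using V_rep by simp
next
  case (Cons ad W)
  obtain a d where ad: "ad = (a, d)" by fastforce
  obtain u \<alpha> where a: "a = (u, \<alpha>)" by fastforce
  have uV: "u \<in> V" and \<alpha>: "\<alpha> \<in> arrs Q" "src Q \<alpha> = wend Q b u" using Cons.prems ad a by auto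
  show ?case
  proof (cases d)
    case True
    have h: "u = v" "is_walk Qt (rep (v @ [(\<alpha>, True)])) W y" using Cons.prems ad a True by auto
    define v' where "v' = rep (v @ [(\<alpha>, True)])"
    have v'V: "v' \<in> V" unfolding v'_def using tgt_V[OF Cons.prems(1)] \<alpha> h(1) by simp
    have wv': "wend Q b v' = tgt Q \<alpha>" unfolding v'_def using wend_tgt[OF Cons.prems(1)] \<alpha> h(1) by simp
    have IH: "y = rep (v' @ mapw snd W)" using Cons.IH[OF v'V] h(2) v'_def by simp
    have "is_walk Q (wend Q b v') (mapw snd W) (wend Q b y)"
      using cov_walk[OF covq_Qt] h(2) v'_def by metis
    then have "rep (v' @ mapw snd W) = rep ((v @ [(\<alpha>, True)]) @ mapw snd W)"
      unfolding v'_def using rep_app[OF walk_snocT[OF Cons.prems(1)]] \<alpha> h(1) wv' v'_def by metis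
    then show ?thesis using IH ad a True by simp
  next
    case False
    have h: "rep (u @ [(\<alpha>, True)]) = v" "is_walk Qt u W y" using Cons.prems ad a False by auto
    have IH: "y = rep (u @ mapw snd W)" using Cons.IH[OF uV] h(2) by simp
    have wv: "wend Q b v = tgt Q \<alpha>" using wend_tgt[OF uV \<alpha>] h(1) by simp
    have wsF: "is_walk Q b (v @ [(\<alpha>, False)]) (src Q \<alpha>)" using walk_snocF[OF Cons.prems(1) \<alpha>(1)] wv by simp
    have "is_walk Q (src Q \<alpha>) [(\<alpha>, False)] (src Q \<alpha>) \<Longrightarrow> True" by simp
    have r1: "rep (v @ [(\<alpha>, False)]) = u"
    proof -
      have wsT: "is_walk Q b (u @ [(\<alpha>, True)]) (tgt Q \<alpha>)" using walk_snocT[OF uV \<alpha>] .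
      have "is_walk Q (tgt Q \<alpha>) [(\<alpha>, False)] (src Q \<alpha>)" using \<alpha>(1) wfQ unfolding wf_quiver_def by simp
      then have "rep (rep (u @ [(\<alpha>, True)]) @ [(\<alpha>, False)]) = rep ((u @ [(\<alpha>, True)]) @ [(\<alpha>, False)])"
        by (rule rep_app[OF wsT])
      then show ?thesis using h(1) cancel_TF[OF uV \<alpha>] by simp
    qed
    have "is_walk Q (wend Q b u) (mapw snd W) (wend Q b y)" using cov_walk[OF covq_Qt h(2)] .
    then have "rep (rep (v @ [(\<alpha>, False)]) @ mapw snd W) = rep ((v @ [(\<alpha>, False)]) @ mapw snd W)"
      using rep_app[OF wsF] \<alpha>(2) by simp
    then show ?thesis using IH r1 ad a False by simp
  qed
qed

end




lemma walk_arrs: "is_walk G x w y \<Longrightarrow> (a, d) \<in> set w \<Longrightarrow> a \<in> arrs G"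
proof (induction w arbitrary: x)
  case Nil then show ?case by simp
next
  case (Cons ad w)
  obtain a' d' where ad: "ad = (a', d')" by fastforce
  show ?case using Cons ad by (cases d') auto
qed

theorem corollary1p17:
  fixes Q :: "('qv, 'qa) quiver" and I :: "'qv \<Rightarrow> 'qv \<Rightarrow> ('qa list \<Rightarrow> 'k::field) set"
    and R :: "('rv, 'ra) quiver" and J :: "'rv \<Rightarrow> 'rv \<Rightarrow> ('ra list \<Rightarrow> 'k) set"
    and \<pi>v :: "'rv \<Rightarrow> 'qv" and \<pi>a :: "'ra \<Rightarrow> 'qa" and x0 :: 'rv
  assumes "alg_closed TYPE('k)"
    and "wf_quiver Q" and "quiver_ideal Q I" and "connected_quiver Q"
    and "wf_quiver R" and "quiver_ideal R J" and "connected_quiver R"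
    and "universal_cover R J Q I \<pi>v \<pi>a"
    and "x0 \<in> verts R"
  shows "carrier (fundamental_group R J x0) = {\<one>\<^bsub>fundamental_group R J x0\<^esub>}"
proof -
  have covRQ: "covering_rel R J Q I \<pi>v \<pi>a" using assms(8) unfolding universal_cover_def by simp
  have cq: "covering_quiver R Q \<pi>v \<pi>a" using covRQ unfolding covering_rel_def by simp
  define b where "b = \<pi>v x0"
  have bv: "b \<in> verts Q" unfolding b_def using cov_vert[OF cq assms(9)] .
  interpret U: ucon Q I b
    by unfold_locales (use assms(2,3,4) bv in auto)
  have UP: "\<forall>(Qb :: (('qa \<times> bool) list, ('qa \<times> bool) list \<times> 'qa) quiver) Ib fv fa xt xb.
        wf_quiver Qb \<and> quiver_ideal Qb Ib \<and> connected_quiver Qb \<and>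
        covering_rel Qb Ib Q I fv fa \<and>
        xt \<in> verts R \<and> xb \<in> verts Qb \<and> \<pi>v xt = fv xb \<longrightarrow>
        (\<exists>gv ga. covering_rel R J Qb Ib gv ga \<and>
           (\<forall>x\<in>verts R. fv (gv x) = \<pi>v x) \<and> (\<forall>\<alpha>\<in>arrs R. fa (ga \<alpha>) = \<pi>a \<alpha>) \<and> gv xt = xb \<and>
           (\<forall>hv ha. covering_rel R J Qb Ib hv ha \<and>
              (\<forall>x\<in>verts R. fv (hv x) = \<pi>v x) \<and> (\<forall>\<alpha>\<in>arrs R. fa (ha \<alpha>) = \<pi>a \<alpha>) \<and> hv xt = xb \<longrightarrow>
              (\<forall>x\<in>verts R. hv x = gv x) \<and> (\<forall>\<alpha>\<in>arrs R. ha \<alpha> = ga \<alpha>)))"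
    using assms(8) unfolding universal_cover_def by blast
  have prem: "wf_quiver U.Qt \<and> quiver_ideal U.Qt U.It \<and> connected_quiver U.Qt \<and>
        covering_rel U.Qt U.It Q I (wend Q b) snd \<and>
        x0 \<in> verts R \<and> U.rep [] \<in> verts U.Qt \<and> \<pi>v x0 = wend Q b (U.rep [])"
  proof (intro conjI)
    show "U.rep [] \<in> verts U.Qt" using U.rep_nil_V by simp
    show "\<pi>v x0 = wend Q b (U.rep [])" using U.wend_rep_nil b_def by simp
  qed (use U.wf_Qt U.quiver_ideal_It U.connected_Qt U.covr_Qt assms(9) in auto)
  obtain gv ga where g: "covering_rel R J U.Qt U.It gv ga" "\<forall>x\<in>verts R. wend Q b (gv x) = \<pi>v x"
    "\<forall>\<alpha>\<in>arrs R. snd (ga \<alpha>) = \<pi>a \<alpha>" "gv x0 = U.rep []"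
    using UP[rule_format, OF prem] by blast
  have cqg: "covering_quiver R U.Qt gv ga" using g(1) unfolding covering_rel_def by simp
  have key: "homotopic R J x0 w []" if w: "is_walk R x0 w x0" for w
  proof -
    have W: "is_walk U.Qt (U.rep []) (mapw ga w) (U.rep [])" using cov_walk[OF cqg w] g(4) by simp
    have e1: "U.rep [] = U.rep (U.rep [] @ mapw snd (mapw ga w))"
      using U.walk_end_rep[OF U.rep_nil_V W] .
    have "\<forall>ad\<in>set w. ((\<lambda>(a, d). (snd a, d)) \<circ> (\<lambda>(a, d). (ga a, d))) ad = (\<lambda>(a, d). (\<pi>a a, d)) ad"
      using walk_arrs[OF w] g(3) by auto
    then have e2: "mapw snd (mapw ga w) = mapw \<pi>a w" unfolding map_map by (simp only: map_eq_conv)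
    have Mw: "is_walk Q b (mapw \<pi>a w) b" using cov_walk[OF cq w] b_def by simp
    have "is_walk Q b [] b" using bv by simp
    then have "U.rep (U.rep [] @ mapw \<pi>a w) = U.rep ([] @ mapw \<pi>a w)" using U.rep_app Mw by metis
    moreover have "U.rep [] = U.rep (U.rep [] @ mapw \<pi>a w)" using e1 unfolding e2 .
    ultimately have "U.rep [] = U.rep (mapw \<pi>a w)" by simp
    then have "homotopic Q I b [] (mapw \<pi>a w)" using U.rep_iff by simp
    then have h: "homotopic Q I (\<pi>v x0) (mapw \<pi>a w) []" using homotopic_sym b_def by metis
    obtain w' where w': "is_walk R x0 w' x0" "mapw \<pi>a w' = []" "homotopic R J x0 w w'"
      using lift_homotopic[OF covRQ assms(5,6) w h] by blast
    then show ?thesis by simp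
  qed
  have cls: "homot_class R J x0 w = homot_class R J x0 []" if w: "is_walk R x0 w x0" for w
  proof -
    have "homotopic R J x0 w w' = homotopic R J x0 [] w'" for w'
    proof
      assume "homotopic R J x0 w w'"
      then show "homotopic R J x0 [] w'" using homotopic_trans[OF homotopic_sym[OF key[OF w]]] by blast
    next
      assume "homotopic R J x0 [] w'"
      then show "homotopic R J x0 w w'" using homotopic_trans[OF key[OF w]] by blast
    qed
    then show ?thesis unfolding homot_class_def by simp
  qed
  have nil: "is_walk R x0 [] x0" using assms(9) by simp
  have c: "carrier (fundamental_group R J x0) = {homot_class R J x0 w | w. is_walk R x0 w x0}"
    unfolding fundamental_group_def by simp
  have o: "\<one>\<^bsub>fundamental_group R J x0\<^esub> = homot_class R J x0 []"
    unfolding fundamental_group_def by simp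
  show ?thesis unfolding c o
  proof (intro Set.set_eqI iffI)
    fix A assume "A \<in> {homot_class R J x0 w | w. is_walk R x0 w x0}"
    then obtain w where "A = homot_class R J x0 w" "is_walk R x0 w x0" by blast
    then show "A \<in> {homot_class R J x0 []}" using cls by simp
  next
    fix A assume "A \<in> {homot_class R J x0 []}"
    then show "A \<in> {homot_class R J x0 w | w. is_walk R x0 w x0}" using nil by blast
  qed
qed



end
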